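(* Let $f\in\mathcal G$. Then for every $s\in\mathbb C$ with $0<\Re s<1$ the Mellin integrals $\hat f(s)=\int_0^\infty t^{s-1}f(t)\,dt$ and $\widehat{Pf}(s)=\int_0^\infty x^{s-1}Pf(x)\,dx$ converge absolutely, and $$\zeta(s)\hat f(s)=\widehat{Pf}(s).$$
   Context: A good kernel is a continuously differentiable function $f:[0,\infty)\to\mathbb C$ with $f(x)\to0$ as $x\to\infty$, $f\in L_1(0,\infty)$, and $\int_0^\infty t|f'(t)|\,dt<\infty$; $\mathcal G$ denotes the class of good kernels. For $f\in\mathcal G$, $Pf(x):=\sum_{n=1}^\infty f(nx)-\frac1x\int_0^\infty f(t)\,dt$ (defined a.e.). $\zeta$ is the Riemann zeta function. The Mellin transform of $g$ is $\hat g(s):=\int_0^\infty t^{s-1}g(t)\,dt$. *)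

theory Defs
  imports "HOL-Complex_Analysis.Complex_Analysis"
begin

definition good_kernel :: "(real \<Rightarrow> complex) \<Rightarrow> bool" where
  "good_kernel f \<longleftrightarrow>
     (\<exists>f'. (\<forall>t\<ge>0. (f has_vector_derivative f' t) (at t within {0..}))
         \<and> continuous_on {0..} f'
         \<and> set_integrable lborel {0<..} (\<lambda>t. complex_of_real t * f' t))
     \<and> (f \<longlongrightarrow> 0) at_top
     \<and> set_integrable lborel {0<..} f"

definition Pop :: "(real \<Rightarrow> complex) \<Rightarrow> real \<Rightarrow> complex" where
  "Pop f x = (\<Sum>n. f (real (Suc n) * x))
             - complex_of_real (1 / x) * (LINT t:{0<..}|lborel. f t)"

definition mellin :: "(real \<Rightarrow> complex) \<Rightarrow> complex \<Rightarrow> complex" where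
  "mellin g s = (LINT t:{0<..}|lborel. complex_of_real t powr (s - 1) * g t)"

definition zeta :: "complex \<Rightarrow> complex" where
  "zeta s = (THE z. \<exists>g. g holomorphic_on (- {1})
                     \<and> (\<forall>w. 1 < Re w \<longrightarrow> g w = (\<Sum>n. 1 / of_nat (Suc n) powr w))
                     \<and> g s = z)"

end

theory Submission
  imports Defs
begin


lemma poch_nonneg: "0 \<le> (x::real) \<Longrightarrow> 0 \<le> pochhammer x n"
  by (simp add: pochhammer_prod prod_nonneg)

lemma norm_pochhammer_le:
  fixes z :: complex
  assumes "norm z \<le> r"
  shows "norm (pochhammer z n) \<le> pochhammer r n"
proof (induction n)
  case 0 then show ?case by simp
next
  case (Suc n)
  have r0: "0 \<le> r" using assms norm_ge_zero order_trans by blast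
  have "norm (pochhammer z (Suc n)) = norm (pochhammer z n) * norm (z + of_nat n)"
    by (simp add: pochhammer_Suc norm_mult)
  also have "\<dots> \<le> pochhammer r n * (r + of_nat n)"
  proof (rule mult_mono)
    show "norm (z + of_nat n) \<le> r + of_nat n"
      using norm_triangle_ineq[of z "of_nat n"] assms by (simp add: norm_of_nat)
  qed (use Suc r0 in \<open>auto intro: poch_nonneg\<close>)
  also have "\<dots> = pochhammer r (Suc n)" by (simp add: pochhammer_Suc)
  finally show ?case .
qed

lemma summable_poch_geom:
  fixes r q :: real
  assumes r: "0 \<le> r" and q: "0 \<le> q" "q < 1"
  shows "summable (\<lambda>j. pochhammer r j / fact j * q ^ j)"
proof (rule summable_ratio_test[where c="(1+q)/2" and N="nat \<lceil>r / ((1-q)/2)\<rceil>"])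
  show "(1 + q) / 2 < 1" using q by simp
  fix n assume n: "nat \<lceil>r / ((1-q)/2)\<rceil> \<le> n"
  have pn: "0 \<le> pochhammer r n / fact n * q ^ n" using r q poch_nonneg[of r n] by simp
  have "r / ((1-q)/2) \<le> real n" using n by linarith
  hence rn: "r \<le> real n * ((1-q)/2)" using q by (simp add: field_simps)
  have "(r + n) * q \<le> (1+q)/2 * (n+1)"
  proof -
    have "(r + n) * q \<le> r + n * q" using q r mult_left_le[of q r] by (simp add: distrib_right)
    also have "\<dots> \<le> real n * ((1-q)/2) + n*q" using rn by simp
    also have "\<dots> \<le> (1+q)/2 * (n+1)" using q by (simp add: field_simps)
    finally show ?thesis .
  qed
  hence ineq: "pochhammer r n / fact n * q ^ n * ((r + n) * q / (n+1)) \<le> pochhammer r n / fact n * q ^ n * ((1+q)/2)"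
    using pn by (intro mult_left_mono) (auto simp: field_simps)
  moreover have eq: "pochhammer r (Suc n) / fact (Suc n) * q ^ Suc n = pochhammer r n / fact n * q ^ n * ((r + n) * q / (n+1))"
    by (simp add: pochhammer_Suc field_simps)
  ultimately have "pochhammer r (Suc n) / fact (Suc n) * q ^ Suc n \<le> (1 + q) / 2 * (pochhammer r n / fact n * q ^ n)"
    by (metis mult.commute)
  moreover have "0 \<le> pochhammer r (Suc n) / fact (Suc n) * q ^ Suc n"
    using r q poch_nonneg[of r "Suc n"] by simp
  ultimately show "norm (pochhammer r (Suc n) / fact (Suc n) * q ^ Suc n) \<le> (1 + q) / 2 * norm (pochhammer r n / fact n * q ^ n)"
    using pn by (metis abs_of_nonneg real_norm_def)
qed

definition Zs :: "complex \<Rightarrow> complex" where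
  "Zs t = (\<Sum>n. of_nat (n+2) powr (-t))"

definition W0 :: "complex \<Rightarrow> complex" where
  "W0 t = (t - 1) * Zs t"

lemma norm_nat_powr: "norm ((of_nat m :: complex) powr z) = real m powr Re z"
  by (subst norm_powr_real_powr) auto

lemma summable_shift2_powr: "1 < a \<Longrightarrow> summable (\<lambda>n. real (n+2) powr (-a))"
proof -
  assume "1 < a"
  hence "summable (\<lambda>n. real n powr (-a))" by (subst summable_real_powr_iff) auto
  from summable_ignore_initial_segment[OF this, of 2] show ?thesis by simp
qed

lemma powr_shift_bound:
  assumes "b \<le> \<sigma>"
  shows "real (n+2) powr (-\<sigma>) \<le> real (n+2) powr (-b) * 2 powr (b - \<sigma>)"
proof -
  have "real (n+2) powr (-\<sigma>) = real (n+2) powr (-b) * real (n+2) powr (b - \<sigma>)"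
    by (subst powr_add[symmetric]) simp
  also have "\<dots> \<le> real (n+2) powr (-b) * 2 powr (b - \<sigma>)"
    by (intro mult_left_mono powr_mono2') (use assms in auto)
  finally show ?thesis .
qed

lemma norm_shift_eq: "(\<lambda>n. norm ((of_nat (n+2) :: complex) powr (-t))) = (\<lambda>n. real (n+2) powr (- Re t))"
proof
  fix n
  show "norm ((of_nat (n+2) :: complex) powr (-t)) = real (n+2) powr (- Re t)"
    using norm_nat_powr[of "n+2" "-t"] by (simp only: uminus_complex.sel)
qed

lemma Zs_summable_norm:
  assumes "1 < Re t"
  shows "summable (\<lambda>n. norm ((of_nat (n+2) :: complex) powr (-t)))"
  unfolding norm_shift_eq using summable_shift2_powr[OF assms] .


lemma Zs_sums: "1 < Re t \<Longrightarrow> (\<lambda>n. (of_nat (n+2) :: complex) powr (-t)) sums Zs t"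
  unfolding Zs_def by (rule summable_sums, rule summable_norm_cancel, rule Zs_summable_norm)


lemma Zs_norm_le:
  assumes "1 < Re t"
  shows "norm (Zs t) \<le> (\<Sum>n. real (n+2) powr (- Re t))"
proof -
  have "norm (Zs t) \<le> (\<Sum>n. norm ((of_nat (n+2) :: complex) powr (-t)))"
    unfolding Zs_def by (rule summable_norm[OF Zs_summable_norm[OF assms]])
  also have "\<dots> = (\<Sum>n. real (n+2) powr (- Re t))"
    unfolding norm_shift_eq ..
  finally show ?thesis .
qed

definition KZ :: real where "KZ = 4 * (\<Sum>n. real (n+2) powr (-2))"



lemma Zs_bound:
  assumes "2 \<le> Re t"
  shows "norm (Zs t) \<le> KZ * 2 powr (- Re t)"
proof -
  have "norm (Zs t) \<le> (\<Sum>n. real (n+2) powr (- Re t))" using assms by (intro Zs_norm_le) auto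
  also have "\<dots> \<le> (\<Sum>n. real (n+2) powr (-2) * 2 powr (2 - Re t))"
  proof (rule suminf_le)
    show "real (n+2) powr (- Re t) \<le> real (n+2) powr (-2) * 2 powr (2 - Re t)" for n
      by (rule powr_shift_bound) (use assms in simp)
    show "summable (\<lambda>n. real (n+2) powr (- Re t))" using assms by (intro summable_shift2_powr) simp
    show "summable (\<lambda>n. real (n+2) powr (-2) * 2 powr (2 - Re t))"
      by (intro summable_mult2 summable_shift2_powr) simp
  qed
  also have "\<dots> = (\<Sum>n. real (n+2) powr (-2)) * 2 powr (2 - Re t)"
    by (rule suminf_mult2[symmetric], rule summable_shift2_powr) simp
  also have "2 powr (2 - Re t) = 4 * 2 powr (- Re t)"
    by (simp add: powr_diff powr_minus divide_simps)
  finally show ?thesis unfolding KZ_def by (simp add: mult_ac)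
qed

lemma Zs_holo: "Zs holomorphic_on {z. 1 < Re z}"
proof -
  have "(\<lambda>z. \<Sum>n. (of_nat (n+2) :: complex) powr (-z)) holomorphic_on {z. 1 < Re z}"
  proof (rule holomorphic_uniform_sequence[where f = "\<lambda>N z. \<Sum>n<N. (of_nat (n+2) :: complex) powr (-z)"])
    show "open {z. 1 < Re z}" by (simp add: open_halfspace_Re_gt)
    show "(\<lambda>z. \<Sum>n<N. (of_nat (n+2) :: complex) powr (-z)) holomorphic_on {z. 1 < Re z}" for N
      by (intro holomorphic_intros)
    fix x assume x: "x \<in> {z. 1 < Re z}"
    define d where "d = (Re x - 1) / 2"
    have d: "0 < d" using x by (simp add: d_def)
    have sub: "1 + d \<le> Re z" if "z \<in> cball x d" for z
    proof -
      have "\<bar>Re x - Re z\<bar> \<le> d"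
        using that abs_Re_le_cmod[of "x - z"] by (simp add: dist_norm)
      hence "Re x - Re z \<le> d" by (rule abs_le_D1)
      thus ?thesis unfolding d_def by (simp add: field_simps)
    qed
    have "cball x d \<subseteq> {z. 1 < Re z}" using sub d by force
    moreover have "uniform_limit (cball x d) (\<lambda>N z. \<Sum>n<N. (of_nat (n+2) :: complex) powr (-z))
        (\<lambda>z. \<Sum>n. (of_nat (n+2) :: complex) powr (-z)) sequentially"
    proof (rule Weierstrass_m_test_ev[where M = "\<lambda>n. real (n+2) powr (-(1+d))"])
      show "summable (\<lambda>n. real (n+2) powr (-(1+d)))" using d by (intro summable_shift2_powr) auto
      show "\<forall>\<^sub>F n in sequentially. \<forall>z\<in>cball x d. norm ((of_nat (n+2) :: complex) powr (-z)) \<le> real (n+2) powr (-(1+d))"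
      proof (intro always_eventually allI ballI)
        fix n z assume "z \<in> cball x d"
        hence "-Re z \<le> -(1+d)" using sub by force
        hence le: "real (n+2) powr (-Re z) \<le> real (n+2) powr (-(1+d))" by (intro powr_mono) auto
        have eq: "norm ((of_nat (n+2) :: complex) powr (-z)) = real (n+2) powr (-Re z)"
          using norm_nat_powr[of "n+2" "-z"] by (simp only: uminus_complex.sel)
        show "norm ((of_nat (n+2) :: complex) powr (-z)) \<le> real (n+2) powr (-(1+d))"
          unfolding eq by (rule le)
      qed
    qed
    ultimately show "\<exists>d>0. cball x d \<subseteq> {z. 1 < Re z} \<and> uniform_limit (cball x d) (\<lambda>N z. \<Sum>n<N. (of_nat (n+2) :: complex) powr (-z))
        (\<lambda>z. \<Sum>n. (of_nat (n+2) :: complex) powr (-z)) sequentially"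
      using d by blast
  qed
  thus ?thesis unfolding Zs_def[abs_def] .
qed



lemma W0_holo: "W0 holomorphic_on {z. 1 < Re z}"
  unfolding W0_def[abs_def] by (intro holomorphic_intros Zs_holo)

definition cc :: "nat \<Rightarrow> complex \<Rightarrow> complex" where
  "cc j s = (-1)^j * pochhammer (s - 1) (j - 1) / fact j"

definition Stp :: "(complex \<Rightarrow> complex) \<Rightarrow> complex \<Rightarrow> complex" where
  "Stp F s = 2 powr (1 - s) + (\<Sum>j. cc (j+2) s * F (s + of_nat (j+1)))"

lemma KZ_nonneg: "0 \<le> KZ"
  unfolding KZ_def by (intro mult_nonneg_nonneg suminf_nonneg summable_shift2_powr) auto

lemma term_bound:
  assumes r: "norm (s - 1) \<le> r" and c: "c \<le> Re s" and j: "2 \<le> c + real j + 1"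
  shows "norm (cc (j+2) s * W0 (s + of_nat (j+1)))
           \<le> KZ * 2 powr (-c) * 2 * (pochhammer r (j+2) / fact (j+2) * (1/2)^(j+2))"
proof -
  have r0: "0 \<le> r" using r norm_ge_zero order_trans by blast
  have n1: "norm (cc (j+2) s) \<le> pochhammer r (j+1) / fact (j+2)"
  proof -
    have "norm (cc (j+2) s) = norm (pochhammer (s - 1) (j+1)) / fact (j+2)"
    proof -
      have "cc (j+2) s = (-1)^(j+2) * pochhammer (s-1) (j+1) / fact (j+2)" unfolding cc_def by simp
      thus ?thesis by (simp only: norm_mult norm_divide norm_power norm_minus_cancel norm_one power_one mult_1_left norm_fact)
    qed
    also have "\<dots> \<le> pochhammer r (j+1) / fact (j+2)"
      by (intro divide_right_mono norm_pochhammer_le r) auto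
    finally show ?thesis .
  qed
  have n2: "norm (s + of_nat (j+1) - 1) \<le> r + real (j+1)"
  proof -
    have "s + of_nat (j+1) - 1 = (s - 1) + of_nat (j+1)" by simp
    also have "norm \<dots> \<le> norm (s - 1) + norm (of_nat (j+1) :: complex)"
      by (rule norm_triangle_ineq)
    also have "norm (of_nat (j+1) :: complex) = real (j+1)" by (rule norm_of_nat)
    finally show ?thesis using r by linarith
  qed
  have ret: "Re (s + of_nat (j+1)) = Re s + real j + 1" by simp
  have n3: "norm (Zs (s + of_nat (j+1))) \<le> KZ * (2 powr (-c) * 2 * (1/2)^(j+2))"
  proof -
    have "norm (Zs (s + of_nat (j+1))) \<le> KZ * 2 powr (- Re (s + of_nat (j+1)))"
      by (rule Zs_bound) (use c j in simp)
    also have "\<dots> \<le> KZ * 2 powr (- (c + real j + 1))"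
      by (intro mult_left_mono KZ_nonneg powr_mono) (use c in auto)
    also have "2 powr (- (c + real j + 1)) = 2 powr (-c) * 2 * (1/2)^(j+2)"
    proof -
      have "2 powr (- (c + real j + 1)) = 2 powr (-c) * 2 powr (- real (j+1))"
        by (subst powr_add[symmetric]) (simp add: algebra_simps)
      also have "2 powr (- real (j+1)) = 2 * (1/2)^(j+2)"
        by (subst powr_minus, subst powr_realpow) (simp_all add: power_one_over field_simps)
      finally show ?thesis by simp
    qed
    finally show ?thesis .
  qed
  have "norm (cc (j+2) s * W0 (s + of_nat (j+1)))
        = norm (cc (j+2) s) * norm (s + of_nat (j+1) - 1) * norm (Zs (s + of_nat (j+1)))"
    unfolding W0_def by (simp add: norm_mult mult_ac)
  also have "\<dots> \<le> (pochhammer r (j+1) / fact (j+2)) * (r + real (j+1)) * (KZ * (2 powr (-c) * 2 * (1/2)^(j+2)))"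
    by (intro mult_mono n1 n2 n3 mult_nonneg_nonneg poch_nonneg r0 divide_nonneg_nonneg KZ_nonneg) (use r0 in auto)
  also have "\<dots> = KZ * 2 powr (-c) * 2 * (pochhammer r (j+2) / fact (j+2) * (1/2)^(j+2))"
  proof -
    have p: "pochhammer r (j+2) = pochhammer r (j+1) * (r + of_nat (j+1))"
      by (subst pochhammer_Suc[symmetric]) simp
    have aux: "\<And>a b c k e h. (a::real) / b * c * (k * (e * 2 * h)) = k * e * 2 * (a * c / b * h)"
      by (simp add: divide_inverse mult_ac)
    show ?thesis unfolding p by (rule aux)
  qed
  finally show ?thesis .
qed

lemma Stp_sum_holo:
  assumes F: "F holomorphic_on {z. a < Re z}" and FW: "\<And>t. 1 < Re t \<Longrightarrow> F t = W0 t"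
  shows "(\<lambda>s. \<Sum>j. cc (j+2) s * F (s + of_nat (j+1))) holomorphic_on {z. a - 1 < Re z}"
proof (rule holomorphic_uniform_sequence[where f = "\<lambda>N s. \<Sum>j<N. cc (j+2) s * F (s + of_nat (j+1))"])
  show "open {z. a - 1 < Re z}" by (simp add: open_halfspace_Re_gt)
  show "(\<lambda>s. \<Sum>j<N. cc (j+2) s * F (s + of_nat (j+1))) holomorphic_on {z. a - 1 < Re z}" for N
  proof (intro holomorphic_on_sum holomorphic_on_mult)
    fix j
    show "(\<lambda>s. cc (j+2) s) holomorphic_on {z. a - 1 < Re z}"
      unfolding cc_def by (intro holomorphic_intros) auto
    have "(F \<circ> (\<lambda>s. s + of_nat (j+1))) holomorphic_on {z. a - 1 < Re z}"
      by (rule holomorphic_on_compose_gen[OF _ F]) (auto intro!: holomorphic_intros)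
    thus "(\<lambda>s. F (s + of_nat (j+1))) holomorphic_on {z. a - 1 < Re z}" by (simp add: o_def)
  qed
  fix x assume x: "x \<in> {z. a - 1 < Re z}"
  define d where "d = (Re x - (a - 1)) / 2"
  define c where "c = Re x - d"
  define r where "r = norm x + d + 1"
  have d: "0 < d" using x by (simp add: d_def)
  have sub: "c \<le> Re z" if "z \<in> cball x d" for z
  proof -
    have "\<bar>Re x - Re z\<bar> \<le> d"
      using that abs_Re_le_cmod[of "x - z"] by (simp add: dist_norm)
    hence "Re x - Re z \<le> d" by (rule abs_le_D1)
    thus ?thesis unfolding c_def by (simp add: field_simps)
  qed
  have ca: "a - 1 < c" unfolding c_def d_def using x by (simp add: field_simps)
  have rz: "norm (z - 1) \<le> r" if "z \<in> cball x d" for z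
  proof -
    have "norm z \<le> norm x + d"
      using that norm_triangle_ineq2[of z x] by (simp add: dist_norm norm_minus_commute)
    thus ?thesis using norm_triangle_ineq4[of z 1] unfolding r_def by simp
  qed
  have "cball x d \<subseteq> {z. a - 1 < Re z}" using sub ca by force
  moreover have "uniform_limit (cball x d) (\<lambda>N s. \<Sum>j<N. cc (j+2) s * F (s + of_nat (j+1)))
        (\<lambda>s. \<Sum>j. cc (j+2) s * F (s + of_nat (j+1))) sequentially"
  proof (rule Weierstrass_m_test_ev[where M = "\<lambda>j. KZ * 2 powr (-c) * 2 * (pochhammer r (j+2) / fact (j+2) * (1/2)^(j+2))"])
    have r0: "0 \<le> r" unfolding r_def using d by simp
    have "summable (\<lambda>j. pochhammer r j / fact j * (1/2::real)^j)"
      by (rule summable_poch_geom) (use r0 in auto)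
    from summable_ignore_initial_segment[OF this, of 2]
    show "summable (\<lambda>j. KZ * 2 powr (-c) * 2 * (pochhammer r (j+2) / fact (j+2) * (1/2)^(j+2)))"
      by (intro summable_mult) simp
    show "\<forall>\<^sub>F j in sequentially. \<forall>z\<in>cball x d. norm (cc (j+2) z * F (z + of_nat (j+1)))
            \<le> KZ * 2 powr (-c) * 2 * (pochhammer r (j+2) / fact (j+2) * (1/2)^(j+2))"
      unfolding eventually_sequentially
    proof (intro exI[of _ "nat \<lceil>1 - c\<rceil>"] allI impI ballI)
      fix j z assume j: "nat \<lceil>1 - c\<rceil> \<le> j" and z: "z \<in> cball x d"
      have j': "2 \<le> c + real j + 1" using j by linarith
      have "1 < Re (z + of_nat (j+1))" using j' sub[OF z] by simp
      hence "F (z + of_nat (j+1)) = W0 (z + of_nat (j+1))" by (rule FW)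
      thus "norm (cc (j+2) z * F (z + of_nat (j+1)))
            \<le> KZ * 2 powr (-c) * 2 * (pochhammer r (j+2) / fact (j+2) * (1/2)^(j+2))"
        using term_bound[OF rz[OF z] sub[OF z] j'] by simp
    qed
  qed
  ultimately show "\<exists>d>0. cball x d \<subseteq> {z. a - 1 < Re z} \<and> uniform_limit (cball x d) (\<lambda>N s. \<Sum>j<N. cc (j+2) s * F (s + of_nat (j+1)))
        (\<lambda>s. \<Sum>j. cc (j+2) s * F (s + of_nat (j+1))) sequentially"
    using d by blast
qed

lemma Stp_holo:
  assumes F: "F holomorphic_on {z. a < Re z}" and FW: "\<And>t. 1 < Re t \<Longrightarrow> F t = W0 t"
  shows "Stp F holomorphic_on {z. a - 1 < Re z}"
  unfolding Stp_def[abs_def] by (intro holomorphic_intros Stp_sum_holo[OF F FW])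

definition bt :: "complex \<Rightarrow> nat \<Rightarrow> nat \<Rightarrow> complex" where
  "bt s n j = ((1 - s) gchoose (j+2)) * of_nat (n+2) powr (-(s + of_nat (j+1)))"

definition T :: "complex \<Rightarrow> nat \<Rightarrow> complex" where
  "T s n = of_nat (n+3) powr (1 - s) - of_nat (n+2) powr (1 - s) - (1 - s) * of_nat (n+2) powr (-s)"

lemma T_sums: "(\<lambda>j. bt s n j) sums T s n"
proof -
  have "\<bar>1\<bar> < \<bar>real (n+2)\<bar>" by simp
  from gen_binomial_complex''[OF this, of "1 - s"]
  have "(\<lambda>k. ((1 - s) gchoose k) * of_nat (n+2) powr (1 - s - of_nat k)) sums of_nat (n+3) powr (1 - s)"
  proof -
    assume h: "(\<lambda>k. ((1 - s) gchoose k) * complex_of_real (real (n + 2)) powr (1 - s - of_nat k) *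
        complex_of_real 1 ^ k) sums complex_of_real (real (n + 2) + 1) powr (1 - s)"
    have e1: "complex_of_real (real (n + 2) + 1) = of_nat (n+3)" by simp
    have e2: "complex_of_real (real (n + 2)) = of_nat (n+2)" by simp
    from h show ?thesis unfolding e1 e2 by simp
  qed
  from sums_split_initial_segment[OF this, of 2]
  have h2: "(\<lambda>j. ((1 - s) gchoose (j+2)) * of_nat (n+2) powr (1 - s - of_nat (j+2))) sums
         (of_nat (n+3) powr (1 - s) - (\<Sum>k<2. ((1 - s) gchoose k) * of_nat (n+2) powr (1 - s - of_nat k)))"
    by simp
  have h3: "(\<Sum>k<2. ((1 - s) gchoose k) * of_nat (n+2) powr (1 - s - of_nat k)) =
      of_nat (n+2) powr (1 - s) + (1 - s) * of_nat (n+2) powr (-s)"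
    by (simp add: numeral_2_eq_2)
  have h4: "of_nat (n+3) powr (1 - s) - (of_nat (n+2) powr (1 - s) + (1 - s) * of_nat (n+2) powr (-s)) = T s n"
    unfolding T_def by (simp add: algebra_simps)
  have eq: "\<And>j. 1 - s - of_nat (j+2) = -(s + of_nat (j+1))" by simp
  from h2 show ?thesis unfolding h3 h4 eq bt_def .
qed

lemma gchoose_cc: "((1 - s) gchoose (j+2)) = cc (j+2) s * (s + of_nat j)"
proof -
  have "((1 - s) gchoose (j+2)) = (-1)^(j+2) * pochhammer (s - 1) (j+2) / fact (j+2)"
    by (simp add: gbinomial_pochhammer)
  also have "pochhammer (s - 1) (j+2) = pochhammer (s - 1) (j+1) * (s + of_nat j)"
  proof -
    have "pochhammer (s-1) (Suc (j+1)) = pochhammer (s-1) (j+1) * (s - 1 + of_nat (j+1))"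
      by (rule pochhammer_Suc)
    thus ?thesis by simp
  qed
  finally show ?thesis unfolding cc_def by simp
qed

lemma norm_gchoose_le: fixes s :: complex shows "norm ((1 - s) gchoose k) \<le> pochhammer (norm (s - 1)) k / fact k"
proof -
  have "(1 - s) gchoose k = (-1)^k * pochhammer (s - 1) k / fact k"
    by (simp add: gbinomial_pochhammer)
  hence "norm ((1 - s) gchoose k) = norm (pochhammer (s - 1) k) / fact k"
    by (simp only: norm_mult norm_divide norm_power norm_minus_cancel norm_one power_one mult_1_left norm_fact)
  also have "\<dots> \<le> pochhammer (norm (s - 1)) k / fact k"
    by (intro divide_right_mono norm_pochhammer_le) auto
  finally show ?thesis .
qed

lemma bt_bound:
  assumes "0 < Re s"
  shows "norm (bt s n j) \<le> real (n+2) powr (-(1 + Re s)) * (pochhammer (norm (s - 1)) (j+2) / fact (j+2) * (1/2)^j)"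
proof -
  have "norm (bt s n j) = norm ((1 - s) gchoose (j+2)) * real (n+2) powr (-(Re s + real j + 1))"
  proof -
    have "Re (-(s + of_nat (j+1))) = -(Re s + real j + 1)" by simp
    thus ?thesis by (simp only: bt_def norm_mult norm_nat_powr)
  qed
  also have "real (n+2) powr (-(Re s + real j + 1)) \<le> real (n+2) powr (-(1 + Re s)) * 2 powr ((1 + Re s) - (Re s + real j + 1))"
    by (rule powr_shift_bound) simp
  also have "2 powr ((1 + Re s) - (Re s + real j + 1)) = (1/2)^j"
    by (simp add: powr_minus powr_realpow field_simps)
  finally have "norm (bt s n j) \<le> norm ((1 - s) gchoose (j+2)) * (real (n+2) powr (-(1 + Re s)) * (1/2)^j)"
    by (simp add: mult_left_mono)
  also have "\<dots> \<le> pochhammer (norm (s - 1)) (j+2) / fact (j+2) * (real (n+2) powr (-(1 + Re s)) * (1/2)^j)"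
    by (intro mult_right_mono norm_gchoose_le) auto
  finally show ?thesis by (simp add: mult_ac)
qed

lemma infsum_nat_eq_suminf:
  fixes f :: "nat \<Rightarrow> 'a :: banach"
  assumes "summable (\<lambda>n. norm (f n))"
  shows "infsum f UNIV = suminf f"
proof (rule infsumI)
  have "summable f" using assms by (rule summable_norm_cancel)
  thus "(f has_sum suminf f) UNIV"
    by (intro norm_summable_imp_has_sum assms summable_sums)
qed

lemma double_sum:
  fixes s :: complex
  assumes s: "0 < Re s"
  shows "(\<lambda>n. T s n) sums (\<Sum>j. cc (j+2) s * W0 (s + of_nat (j+1)))"
proof -
  define r where "r = norm (s - 1)"
  define A where "A j = pochhammer r (j+2) / fact (j+2) * (1/2::real)^j" for j
  define B where "B n = real (n+2) powr (-(1 + Re s))" for n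
  have r0: "0 \<le> r" unfolding r_def by simp
  have A0: "0 \<le> A j" for j unfolding A_def using poch_nonneg[OF r0] by simp
  have B0: "0 \<le> B n" for n unfolding B_def by simp
  have sA: "summable A"
  proof -
    have "summable (\<lambda>j. pochhammer r j / fact j * (1/2::real)^j)"
      by (rule summable_poch_geom) (use r0 in auto)
    from summable_mult[OF summable_ignore_initial_segment[OF this, of 2], of 4]
    have "summable (\<lambda>j. 4 * (pochhammer r (j+2) / fact (j+2) * (1/2::real)^(j+2)))" .
    moreover have "(\<lambda>j. 4 * (pochhammer r (j+2) / fact (j+2) * (1/2::real)^(j+2))) = A"
      unfolding A_def by (rule ext) (simp add: power_add)
    ultimately show ?thesis by simp
  qed
  have sB: "summable B" unfolding B_def using s by (intro summable_shift2_powr) simp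
  define SA where "SA = suminf A"
  define SB where "SB = suminf B"
  have bnd: "norm (bt s n j) \<le> B n * A j" for n j
    unfolding A_def B_def r_def using bt_bound[OF s] by simp
  have hA: "(A has_sum SA) UNIV"
    unfolding SA_def using A0 sA by (intro norm_summable_imp_has_sum summable_sums) simp_all
  have prod_sum: "(\<lambda>p. B (fst p) * A (snd p)) summable_on (Sigma UNIV (\<lambda>_. UNIV))"
  proof (rule summable_on_SigmaI[where g = "\<lambda>n. B n * SA"])
    show "((\<lambda>y. B (fst (x, y)) * A (snd (x, y))) has_sum B x * SA) UNIV" for x
      using has_sum_cmult_right[OF hA, of "B x"] by simp
    show "(\<lambda>n. B n * SA) summable_on UNIV"
      using B0 A0 sA unfolding SA_def
      by (subst summable_on_UNIV_nonneg_real_iff) (auto intro!: summable_mult2 sB mult_nonneg_nonneg suminf_nonneg)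
    show "0 \<le> B (fst (x, y)) * A (snd (x, y))" for x y using A0 B0 by simp
  qed
  have abs_f: "(\<lambda>p. norm (case p of (n, j) \<Rightarrow> bt s n j)) summable_on (UNIV \<times> UNIV)"
  proof (rule Infinite_Sum.abs_summable_on_comparison_test[where g = "\<lambda>p. B (fst p) * A (snd p)"])
    have "(\<lambda>p. norm (B (fst p) * A (snd p))) = (\<lambda>p. B (fst p) * A (snd p))"
      using A0 B0 by (auto simp: abs_mult)
    thus "(\<lambda>p. norm (B (fst p) * A (snd p))) summable_on UNIV \<times> UNIV"
      using prod_sum by simp
    fix p :: "nat \<times> nat"
    show "norm (case p of (n, j) \<Rightarrow> bt s n j) \<le> norm (B (fst p) * A (snd p))"
      using bnd[of "fst p" "snd p"] A0 B0 by (cases p) (simp add: abs_mult)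
  qed
  have swap: "infsum (\<lambda>n. infsum (\<lambda>j. bt s n j) UNIV) UNIV = infsum (\<lambda>j. infsum (\<lambda>n. bt s n j) UNIV) UNIV"
    by (rule infsum_swap_banach) (rule abs_summable_summable[OF abs_f])
  have sj: "summable (\<lambda>j. norm (bt s n j))" for n
    by (rule summable_comparison_test[where g = "\<lambda>j. B n * A j"]) (use bnd sA in \<open>auto intro: summable_mult\<close>)
  have sn: "summable (\<lambda>n. norm (bt s n j))" for j
    by (rule summable_comparison_test[where g = "\<lambda>n. B n * A j"]) (use bnd sB in \<open>auto intro: summable_mult2\<close>)
  have inner1: "infsum (\<lambda>j. bt s n j) UNIV = T s n" for n
    using infsum_nat_eq_suminf[OF sj] T_sums[of s n] by (simp add: sums_iff)
  have colsum: "(\<lambda>n. bt s n j) sums (cc (j+2) s * W0 (s + of_nat (j+1)))" for j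
  proof -
    have "1 < Re (s + of_nat (j+1))" using s by simp
    from sums_mult[OF Zs_sums[OF this], of "(1 - s) gchoose (j+2)"]
    have "(\<lambda>n. bt s n j) sums (((1 - s) gchoose (j+2)) * Zs (s + of_nat (j+1)))"
      unfolding bt_def by simp
    also have "((1 - s) gchoose (j+2)) * Zs (s + of_nat (j+1)) = cc (j+2) s * W0 (s + of_nat (j+1))"
      unfolding gchoose_cc W0_def by (simp add: algebra_simps)
    finally show ?thesis .
  qed
  have inner2: "infsum (\<lambda>n. bt s n j) UNIV = cc (j+2) s * W0 (s + of_nat (j+1))" for j
    using infsum_nat_eq_suminf[OF sn] colsum[of j] by (simp add: sums_iff)
  have normT: "norm (T s n) \<le> B n * SA" for n
  proof -
    have "norm (T s n) = norm (\<Sum>j. bt s n j)" using T_sums[of s n] by (simp add: sums_iff)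
    also have "\<dots> \<le> (\<Sum>j. B n * A j)" by (rule norm_suminf_le[OF bnd]) (intro summable_mult sA)
    also have "\<dots> = B n * SA" unfolding SA_def by (rule suminf_mult[OF sA])
    finally show ?thesis .
  qed
  have normC: "norm (cc (j+2) s * W0 (s + of_nat (j+1))) \<le> SB * A j" for j
  proof -
    have "norm (cc (j+2) s * W0 (s + of_nat (j+1))) = norm (\<Sum>n. bt s n j)" using colsum[of j] by (simp add: sums_iff)
    also have "\<dots> \<le> (\<Sum>n. B n * A j)" by (rule norm_suminf_le[OF bnd]) (intro summable_mult2 sB)
    also have "\<dots> = SB * A j" unfolding SB_def by (rule suminf_mult2[OF sB, symmetric])
    finally show ?thesis .
  qed
  have sT: "summable (\<lambda>n. norm (T s n))"
    by (rule summable_comparison_test[where g = "\<lambda>n. B n * SA"]) (use normT sB in \<open>auto intro: summable_mult2\<close>)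
  have sC: "summable (\<lambda>j. norm (cc (j+2) s * W0 (s + of_nat (j+1))))"
    by (rule summable_comparison_test[where g = "\<lambda>j. SB * A j"]) (use normC sA in \<open>auto intro: summable_mult\<close>)
  have "suminf (T s) = (\<Sum>j. cc (j+2) s * W0 (s + of_nat (j+1)))"
    using swap unfolding inner1 inner2 infsum_nat_eq_suminf[OF sT] infsum_nat_eq_suminf[OF sC] .
  moreover have "summable (T s)" using sT by (rule summable_norm_cancel)
  ultimately show ?thesis by (simp add: sums_iff)
qed

lemma T_partial:
  "(\<Sum>n<N. T s n) = of_nat (N+2) powr (1-s) - 2 powr (1-s) - (1-s) * (\<Sum>n<N. of_nat (n+2) powr (-s))"
proof (induction N)
  case 0 then show ?case by simp
next
  case (Suc N)
  have "(\<Sum>n<Suc N. T s n) = (\<Sum>n<N. T s n) + T s N" by simp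
  also have "\<dots> = of_nat (N+2) powr (1-s) - 2 powr (1-s) - (1-s) * (\<Sum>n<N. of_nat (n+2) powr (-s)) + T s N"
    using Suc.IH by simp
  also have "\<dots> = of_nat (Suc N+2) powr (1-s) - 2 powr (1-s) - (1-s) * (\<Sum>n<Suc N. of_nat (n+2) powr (-s))"
    unfolding T_def by (simp add: algebra_simps)
  finally show ?case .
qed

lemma Stp_W0_eq:
  assumes s: "1 < Re s"
  shows "Stp W0 s = W0 s"
proof -
  have lim1: "(\<lambda>N. \<Sum>n<N. T s n) \<longlonglongrightarrow> (\<Sum>j. cc (j+2) s * W0 (s + of_nat (j+1)))"
    using double_sum[of s] s by (simp add: sums_def)
  have p0: "(\<lambda>N. (of_nat (N+2) :: complex) powr (1-s)) \<longlonglongrightarrow> 0"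
    by (rule tendsto_neg_powr_complex_of_nat[OF filterlim_add_const_nat_at_top]) (use s in simp)
  have z: "(\<lambda>N. \<Sum>n<N. (of_nat (n+2) :: complex) powr (-s)) \<longlonglongrightarrow> Zs s"
    using Zs_sums[OF s] by (simp add: sums_def)
  have lim2: "(\<lambda>N. \<Sum>n<N. T s n) \<longlonglongrightarrow> 0 - 2 powr (1-s) - (1-s) * Zs s"
    unfolding T_partial by (intro tendsto_intros p0 z)
  have "(\<Sum>j. cc (j+2) s * W0 (s + of_nat (j+1))) = 0 - 2 powr (1-s) - (1-s) * Zs s"
    using LIMSEQ_unique[OF lim1 lim2] .
  thus ?thesis unfolding Stp_def W0_def by (simp add: algebra_simps)
qed


lemma zeta_lim_aux:
  assumes s: "0 < Re s" "Re s < 1"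
  shows "(\<lambda>N. (\<Sum>n<N. (of_nat (Suc n) :: complex) powr (-s)) - of_nat (N+1) powr (1-s) / (1-s))
           \<longlonglongrightarrow> 1 + Stp W0 s / (s - 1)"
proof -
  have s1: "1 - s \<noteq> 0" using s by auto
  define P where "P N = (\<Sum>n<N. T s n)" for N
  have lim1: "P \<longlonglongrightarrow> Stp W0 s - 2 powr (1 - s)"
    using double_sum[of s] s unfolding P_def[abs_def] by (simp add: sums_def Stp_def)
  have eq: "(\<Sum>n<N+1. (of_nat (Suc n) :: complex) powr (-s)) - of_nat (N+1+1) powr (1-s) / (1-s)
            = 1 - (2 powr (1-s) + P N) / (1 - s)" for N
  proof -
    have "(\<Sum>n<Suc N. (of_nat (Suc n) :: complex) powr (-s)) = of_nat (Suc 0) powr (-s) + (\<Sum>n<N. of_nat (Suc (Suc n)) powr (-s))"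
      by (rule sum.lessThan_Suc_shift)
    hence "(\<Sum>n<N+1. (of_nat (Suc n) :: complex) powr (-s)) = 1 + (\<Sum>n<N. of_nat (n+2) powr (-s))"
      by simp
    moreover have "(\<Sum>n<N. (of_nat (n+2) :: complex) powr (-s)) = (of_nat (N+2) powr (1-s) - 2 powr (1-s) - P N) / (1 - s)"
      unfolding P_def T_partial using s1 by (simp add: field_simps)
    moreover have "of_nat (N+1+1) = (of_nat (N+2) :: complex)" by simp
    ultimately show ?thesis using s1 by (simp add: field_simps)
  qed
  have "(\<lambda>N. 1 - (2 powr (1-s) + P N) / (1 - s)) \<longlonglongrightarrow> 1 - (2 powr (1-s) + (Stp W0 s - 2 powr (1 - s))) / (1 - s)"
    by (intro tendsto_intros lim1) (use s1 in simp)
  also have "1 - (2 powr (1-s) + (Stp W0 s - 2 powr (1 - s))) / (1 - s) = 1 + Stp W0 s / (s - 1)"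
    using s1 by (simp add: field_simps)
  finally have "(\<lambda>N. (\<Sum>n<N+1. (of_nat (Suc n) :: complex) powr (-s)) - of_nat (N+1+1) powr (1-s) / (1-s))
                 \<longlonglongrightarrow> 1 + Stp W0 s / (s - 1)"
    unfolding eq .
  thus ?thesis by (rule LIMSEQ_offset)
qed


lemma Stp_agree:
  assumes "\<And>t. 1 < Re t \<Longrightarrow> F t = W0 t" "1 < Re t"
  shows "Stp F t = W0 t"
proof -
  have "Stp F t = Stp W0 t" unfolding Stp_def using assms by simp
  thus ?thesis using Stp_W0_eq[OF assms(2)] by simp
qed

lemma conn_half: "connected {z::complex. a < Re z}"
  by (rule convex_connected) (rule convex_halfspace_Re_gt)


lemma W_exists: "\<exists>W. W holomorphic_on UNIV \<and> (\<forall>t. 1 < Re t \<longrightarrow> W t = W0 t)"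
proof -
  have step: "\<exists>F. F holomorphic_on {z. 1 - real k < Re z} \<and> (\<forall>t. 1 < Re t \<longrightarrow> F t = W0 t)" for k
  proof (induction k)
    case 0
    have "W0 holomorphic_on {z. 1 - real 0 < Re z}" using W0_holo by simp
    then show ?case by blast
  next
    case (Suc k)
    then obtain F where F: "F holomorphic_on {z. 1 - real k < Re z}" "\<forall>t. 1 < Re t \<longrightarrow> F t = W0 t" by blast
    have "Stp F holomorphic_on {z. (1 - real k) - 1 < Re z}" by (rule Stp_holo) (use F in auto)
    moreover have "(1 - real k) - 1 = 1 - real (Suc k)" by simp
    ultimately have "Stp F holomorphic_on {z. 1 - real (Suc k) < Re z}" by simp
    moreover have "\<forall>t. 1 < Re t \<longrightarrow> Stp F t = W0 t"
    proof (intro allI impI)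
      fix t :: complex assume "1 < Re t"
      show "Stp F t = W0 t" by (rule Stp_agree) (use F(2) \<open>1 < Re t\<close> in auto)
    qed
    ultimately show ?case by blast
  qed
  then obtain Fk where Fk: "\<And>k. Fk k holomorphic_on {z. 1 - real k < Re z}" "\<And>k t. 1 < Re t \<Longrightarrow> Fk k t = W0 t"
    by metis
  have agree: "Fk k z = Fk m z" if "1 - real k < Re z" "1 - real m < Re z" for k m z
  proof -
    have o1: "open {z::complex. 1 < Re z}" by (simp add: open_halfspace_Re_gt)
    have o2: "open {z::complex. 1 - real (min k m) < Re z}" by (simp add: open_halfspace_Re_gt)
    have ne: "{z::complex. 1 < Re z} \<noteq> {}" by (auto intro!: exI[of _ 2])
    have sub: "{z::complex. 1 < Re z} \<subseteq> {z. 1 - real (min k m) < Re z}" by auto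
    have h1: "Fk k holomorphic_on {z. 1 - real (min k m) < Re z}"
      by (rule holomorphic_on_subset[OF Fk(1)]) auto
    have h2: "Fk m holomorphic_on {z. 1 - real (min k m) < Re z}"
      by (rule holomorphic_on_subset[OF Fk(1)]) auto
    have eqs: "\<And>w. w \<in> {z. 1 < Re z} \<Longrightarrow> Fk k w = Fk m w" using Fk(2) by simp
    have zm: "z \<in> {z. 1 - real (min k m) < Re z}" using that by (auto simp: min_def)
    show ?thesis by (rule analytic_continuation_open[OF o1 o2 ne conn_half sub h1 h2 eqs zm])
  qed
  define kz where "kz z = nat \<lceil>1 - Re z\<rceil> + 1" for z :: complex
  have kz: "1 - real (kz z) < Re z" for z unfolding kz_def by linarith
  define W where "W z = Fk (kz z) z" for z
  have "W holomorphic_on (\<Union>k\<in>UNIV. {z. 1 - real k < Re z})"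
  proof (rule holomorphic_on_UN_open)
    fix k :: nat
    show "open {z. 1 - real k < Re z}" by (simp add: open_halfspace_Re_gt)
    show "W holomorphic_on {z. 1 - real k < Re z}"
    proof (rule holomorphic_transform[OF Fk(1)[of k]])
      fix z assume "z \<in> {z. 1 - real k < Re z}"
      thus "Fk k z = W z" unfolding W_def using agree[of k z "kz z"] kz[of z] by simp
    qed
  qed
  moreover have "(\<Union>k\<in>UNIV. {z. 1 - real k < Re z}) = UNIV"
  proof (intro set_eqI iffI)
    fix z :: complex show "z \<in> (\<Union>k\<in>UNIV. {z. 1 - real k < Re z})" using kz[of z] by blast
  qed simp
  moreover have "\<forall>t. 1 < Re t \<longrightarrow> W t = W0 t" unfolding W_def using Fk(2) by simp
  ultimately show ?thesis by auto
qed



lemma dirichlet_eq: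
  assumes w: "1 < Re w"
  shows "(\<Sum>n. 1 / (of_nat (Suc n) :: complex) powr w) = 1 + Zs w"
proof -
  have e: "(\<lambda>n. 1 / (of_nat (Suc (Suc n)) :: complex) powr w) = (\<lambda>n. of_nat (n+2) powr (-w))"
    by (rule ext) (simp add: powr_minus_divide)
  have h: "(\<lambda>n. 1 / (of_nat (Suc (Suc n)) :: complex) powr w) sums Zs w"
    unfolding e by (rule Zs_sums[OF w])
  hence "(\<lambda>n. 1 / (of_nat (Suc n) :: complex) powr w) sums (Zs w + 1 / of_nat (Suc 0) powr w)"
    by (subst sums_Suc_iff[symmetric]) simp
  thus ?thesis by (simp add: sums_iff)
qed

lemma zeta_eq:
  assumes s: "0 < Re s" "Re s < 1"
  shows "zeta s = 1 + Stp W0 s / (s - 1)"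
proof -
  obtain W where W: "W holomorphic_on UNIV" "\<And>t. 1 < Re t \<Longrightarrow> W t = W0 t"
    using W_exists by blast
  define g where "g z = 1 + W z / (z - 1)" for z
  have gh: "g holomorphic_on (- {1})"
    unfolding g_def[abs_def] by (intro holomorphic_intros holomorphic_on_subset[OF W(1)]) auto
  have gd: "\<forall>w. 1 < Re w \<longrightarrow> g w = (\<Sum>n. 1 / of_nat (Suc n) powr w)"
  proof (intro allI impI)
    fix w :: complex assume w: "1 < Re w"
    hence "w - 1 \<noteq> 0" by auto
    hence "g w = 1 + Zs w" unfolding g_def W(2)[OF w] W0_def by simp
    thus "g w = (\<Sum>n. 1 / of_nat (Suc n) powr w)" using dirichlet_eq[OF w] by simp
  qed
  have o1: "open {z::complex. 1 < Re z}" by (simp add: open_halfspace_Re_gt)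
  have ne: "{z::complex. 1 < Re z} \<noteq> {}" by (auto intro!: exI[of _ 2])
  have s_ne1: "s \<noteq> 1" using s by auto
  have "zeta s = g s"
    unfolding zeta_def
  proof (rule the_equality)
    show "\<exists>g'. g' holomorphic_on - {1} \<and> (\<forall>w. 1 < Re w \<longrightarrow> g' w = (\<Sum>n. 1 / of_nat (Suc n) powr w)) \<and> g' s = g s"
      using gh gd by blast
    fix z assume "\<exists>g'. g' holomorphic_on - {1} \<and> (\<forall>w. 1 < Re w \<longrightarrow> g' w = (\<Sum>n. 1 / of_nat (Suc n) powr w)) \<and> g' s = z"
    then obtain g' where g': "g' holomorphic_on - {1}" "\<forall>w. 1 < Re w \<longrightarrow> g' w = (\<Sum>n. 1 / of_nat (Suc n) powr w)" "g' s = z"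
      by blast
    have "g' s = g s"
    proof (rule analytic_continuation_open[OF o1 _ ne _ _ g'(1) gh])
      show "open (- {1::complex})" by auto
      show "connected (- {1::complex})" by (rule connected_punctured_universe) simp
      show "{z::complex. 1 < Re z} \<subseteq> - {1}" by auto
      show "g' w = g w" if "w \<in> {z. 1 < Re z}" for w using that g'(2) gd by simp
      show "s \<in> - {1}" using s_ne1 by simp
    qed
    thus "z = g s" using g'(3) by simp
  qed
  also have "W s = Stp W0 s"
  proof -
    have o2: "open {z::complex. 1 - 1 < Re z}" by (simp add: open_halfspace_Re_gt)
    have sub: "{z::complex. 1 < Re z} \<subseteq> {z. 1 - 1 < Re z}" by auto
    have h1: "W holomorphic_on {z. 1 - 1 < Re z}" by (rule holomorphic_on_subset[OF W(1)]) auto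
    have h2: "Stp W0 holomorphic_on {z. 1 - 1 < Re z}" by (rule Stp_holo[OF W0_holo]) simp
    have eqs: "\<And>w. w \<in> {z. 1 < Re z} \<Longrightarrow> W w = Stp W0 w" using W(2) Stp_W0_eq by simp
    have zm: "s \<in> {z. 1 - 1 < Re z}" using s by simp
    show ?thesis by (rule analytic_continuation_open[OF o1 o2 ne conn_half sub h1 h2 eqs zm])
  qed
  hence "g s = 1 + Stp W0 s / (s - 1)" unfolding g_def by simp
  finally show ?thesis .
qed

lemma zeta_lim:
  assumes s: "0 < Re s" "Re s < 1"
  shows "(\<lambda>N. (\<Sum>n<N. (of_nat (Suc n) :: complex) powr (-s)) - of_nat (N+1) powr (1-s) / (1-s))
           \<longlonglongrightarrow> zeta s"
  unfolding zeta_eq[OF s] by (rule zeta_lim_aux[OF s])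




lemma set_integrable_nonneg_HK:
  fixes h :: "real \<Rightarrow> real"
  assumes "h integrable_on S" "\<And>x. x \<in> S \<Longrightarrow> 0 \<le> h x"
    and "S \<in> sets borel" "continuous_on S h"
  shows "set_integrable lborel S h"
proof -
  have "h absolutely_integrable_on S"
    using assms(1,2) by (rule nonnegative_absolutely_integrable_1)
  hence "integrable lebesgue (\<lambda>x. indicator S x *\<^sub>R h x)" by (simp add: set_integrable_def)
  moreover have "(\<lambda>x. indicator S x *\<^sub>R h x) \<in> borel_measurable lborel"
    using borel_measurable_continuous_on_indicator[OF assms(3,4)] by simp
  ultimately show ?thesis unfolding set_integrable_def
    using integrable_completion by blast
qed

definition wdom :: "real \<Rightarrow> real \<Rightarrow> real" where
  "wdom \<sigma> y = y powr (\<sigma> - 1) * min 1 (1 / y)"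

lemma wdom_nonneg: "0 \<le> y \<Longrightarrow> 0 \<le> wdom \<sigma> y"
  unfolding wdom_def by (auto simp: min_def)

lemma wdom_int:
  assumes s: "0 < \<sigma>" "\<sigma> < 1"
  shows "set_integrable lborel {0<..} (wdom \<sigma>)"
proof -
  have a: "set_integrable lborel {0<..1} (wdom \<sigma>)"
  proof -
    have "set_integrable lborel {0<..1} (\<lambda>y. y powr (\<sigma> - 1))"
      by (rule set_integrable_nonneg_HK[OF integrable_on_powr_from_0'])
         (use s in \<open>auto intro!: continuous_intros\<close>)
    moreover have "y \<in> {0<..1} \<Longrightarrow> y powr (\<sigma> - 1) = wdom \<sigma> y" for y
      unfolding wdom_def by (auto simp: min_def field_simps)
    ultimately show ?thesis using set_integrable_cong[of lborel lborel "{0<..1}" "{0<..1}"] by metis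
  qed
  have b: "set_integrable lborel {1<..} (wdom \<sigma>)"
  proof -
    have i1: "(\<lambda>y. y powr (\<sigma> - 2)) integrable_on {1..}"
      using has_integral_powr_to_inf[of "\<sigma> - 2" 1] s unfolding integrable_on_def by auto
    have i2: "(\<lambda>y. y powr (\<sigma> - 2)) integrable_on {1<..}"
      by (rule integrable_spike_set[OF i1]) (auto intro: negligible_subset[of "{1}"] negligible_subset[of "{}"])
    have "set_integrable lborel {1<..} (\<lambda>y. y powr (\<sigma> - 2))"
      by (rule set_integrable_nonneg_HK[OF i2]) (auto intro!: continuous_intros)
    moreover have "y \<in> {1<..} \<Longrightarrow> y powr (\<sigma> - 2) = wdom \<sigma> y" for y
    proof -
      assume y: "y \<in> {1<..}"
      hence "y powr (\<sigma> - 1) * (1 / y) = y powr (\<sigma> - 2)"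
        by (simp add: powr_diff powr_minus_divide field_simps power2_eq_square)
      thus ?thesis unfolding wdom_def using y by (simp add: min_def)
    qed
    ultimately show ?thesis using set_integrable_cong[of lborel lborel "{1<..}" "{1<..}"] by metis
  qed
  have "{0<..} = {0<..1} \<union> ({1<..} :: real set)" by auto
  thus ?thesis using set_integrable_Un[OF a b] by simp
qed

lemma norm_ofreal_powr: "0 < t \<Longrightarrow> norm (complex_of_real t powr z) = t powr Re z"
  by (subst norm_powr_real_powr) auto

lemma mellin_scale:
  fixes g :: "real \<Rightarrow> complex" and c :: real
  assumes c: "0 < c" and gi: "set_integrable lborel {0<..} (\<lambda>t. complex_of_real t powr (s - 1) * g t)"
  shows "set_integrable lborel {0<..} (\<lambda>x. complex_of_real x powr (s - 1) * g (c * x))"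
    and "(LINT x:{0<..}|lborel. complex_of_real x powr (s - 1) * g (c * x))
           = complex_of_real c powr (-s) * (LINT t:{0<..}|lborel. complex_of_real t powr (s - 1) * g t)"
proof -
  define F where "F y = indicator {0<..} y *\<^sub>R (complex_of_real y powr (s - 1) * g y)" for y :: real
  define H where "H x = indicator {0<..} x *\<^sub>R (complex_of_real x powr (s - 1) * g (c * x))" for x :: real
  have Fi: "integrable lborel F" using gi unfolding F_def set_integrable_def .
  have FH: "F (0 + c * x) = complex_of_real c powr (s - 1) * H x" for x
  proof (cases "0 < x")
    case True
    have "complex_of_real (c * x) powr (s - 1) = complex_of_real c powr (s - 1) * complex_of_real x powr (s - 1)"
      using c True by (subst of_real_mult, subst powr_times_real) auto
    thus ?thesis using True c unfolding F_def H_def by simp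
  next
    case False
    hence "\<not> 0 < c * x" using c by (simp add: zero_less_mult_iff)
    thus ?thesis using False unfolding F_def H_def by simp
  qed
  have cne: "complex_of_real c powr (s - 1) \<noteq> 0" using c by simp
  have "integrable lborel (\<lambda>x. F (0 + c * x))"
    by (rule lborel_integrable_real_affine[OF Fi]) (use c in simp)
  hence i1: "integrable lborel (\<lambda>x. complex_of_real c powr (s - 1) * H x)" unfolding FH .
  hence "integrable lborel (\<lambda>x. inverse (complex_of_real c powr (s - 1)) * (complex_of_real c powr (s - 1) * H x))"
    by (rule integrable_mult_right)
  moreover have "(\<lambda>x. inverse (complex_of_real c powr (s - 1)) * (complex_of_real c powr (s - 1) * H x)) = H"
  proof
    fix x
    have "inverse (complex_of_real c powr (s - 1)) * (complex_of_real c powr (s - 1) * H x)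
          = (inverse (complex_of_real c powr (s - 1)) * complex_of_real c powr (s - 1)) * H x"
      by (rule mult.assoc[symmetric])
    thus "inverse (complex_of_real c powr (s - 1)) * (complex_of_real c powr (s - 1) * H x) = H x"
      by (simp only: left_inverse[OF cne] mult_1_left)
  qed
  ultimately have Hi: "integrable lborel H" by simp
  thus "set_integrable lborel {0<..} (\<lambda>x. complex_of_real x powr (s - 1) * g (c * x))"
    unfolding set_integrable_def H_def .
  have "integral\<^sup>L lborel F = \<bar>c\<bar> *\<^sub>R integral\<^sup>L lborel (\<lambda>x. F (0 + c * x))"
    by (rule lborel_integral_real_affine) (use c in simp)
  also have "\<dots> = complex_of_real c * (complex_of_real c powr (s - 1) * integral\<^sup>L lborel H)"
    unfolding FH using c by (simp add: scaleR_conv_of_real)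
  finally have e1: "integral\<^sup>L lborel F = (complex_of_real c * complex_of_real c powr (s - 1)) * integral\<^sup>L lborel H"
    by (simp only: mult.assoc)
  have e2: "complex_of_real c * complex_of_real c powr (s - 1) = complex_of_real c powr s"
  proof -
    have "complex_of_real c powr s = complex_of_real c powr (1 + (s - 1))" by simp
    also have "\<dots> = complex_of_real c powr 1 * complex_of_real c powr (s - 1)" by (rule powr_add)
    finally show ?thesis by simp
  qed
  have "integral\<^sup>L lborel F = complex_of_real c powr s * integral\<^sup>L lborel H" using e1 unfolding e2 .
  hence "integral\<^sup>L lborel H = complex_of_real c powr (-s) * integral\<^sup>L lborel F"
    using c by (simp add: powr_minus field_simps)
  thus "(LINT x:{0<..}|lborel. complex_of_real x powr (s - 1) * g (c * x))
           = complex_of_real c powr (-s) * (LINT t:{0<..}|lborel. complex_of_real t powr (s - 1) * g t)"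
    unfolding set_lebesgue_integral_def F_def H_def .
qed

lemma set_integral_sum_gen:
  fixes f :: "'i \<Rightarrow> 'a \<Rightarrow> 'b::{banach, second_countable_topology}"
  assumes "\<And>i. i \<in> I \<Longrightarrow> set_integrable M A (f i)"
  shows "set_integrable M A (\<lambda>x. \<Sum>i\<in>I. f i x)"
    and "(LINT x:A|M. (\<Sum>i\<in>I. f i x)) = (\<Sum>i\<in>I. LINT x:A|M. f i x)"
proof -
  have e: "(\<lambda>x. indicator A x *\<^sub>R (\<Sum>i\<in>I. f i x)) = (\<lambda>x. \<Sum>i\<in>I. indicator A x *\<^sub>R f i x)"
    by (simp add: scaleR_sum_right)
  show "set_integrable M A (\<lambda>x. \<Sum>i\<in>I. f i x)"
    unfolding set_integrable_def e using assms unfolding set_integrable_def by (intro Bochner_Integration.integrable_sum) auto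
  show "(LINT x:A|M. (\<Sum>i\<in>I. f i x)) = (\<Sum>i\<in>I. LINT x:A|M. f i x)"
    unfolding set_lebesgue_integral_def e using assms unfolding set_integrable_def by (intro Bochner_Integration.integral_sum) auto
qed

context
  fixes f f' :: "real \<Rightarrow> complex"
  assumes fd: "\<And>t. 0 \<le> t \<Longrightarrow> (f has_vector_derivative f' t) (at t within {0..})"
    and f'c: "continuous_on {0..} f'"
    and tf'i: "set_integrable lborel {0<..} (\<lambda>t. complex_of_real t * f' t)"
    and flim: "(f \<longlongrightarrow> 0) at_top"
    and fi: "set_integrable lborel {0<..} f"
begin

lemma fc: "continuous_on {0..} f"
  unfolding continuous_on_eq_continuous_within
proof
  fix t :: real assume "t \<in> {0..}"
  thus "continuous (at t within {0..}) f" using has_vector_derivative_continuous[OF fd[of t]] by simp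
qed

lemma fbound: "\<exists>B\<ge>0. \<forall>t\<ge>0. norm (f t) \<le> B"
proof -
  have "\<forall>\<^sub>F t in at_top. norm (f t) < 1"
    using order_tendstoD(2)[OF tendsto_norm[OF flim], of 1] by simp
  then obtain T where T: "\<And>t. t \<ge> T \<Longrightarrow> norm (f t) < 1"
    by (auto simp: eventually_at_top_linorder)
  have "compact (f ` {0..max T 0})"
    by (rule compact_continuous_image[OF continuous_on_subset[OF fc]]) auto
  then obtain B' where B': "\<And>y. y \<in> f ` {0..max T 0} \<Longrightarrow> norm y \<le> B'"
    by (meson bounded_iff compact_imp_bounded)
  have "\<forall>t\<ge>0. norm (f t) \<le> max 1 B'"
  proof (intro allI impI)
    fix t :: real assume t: "0 \<le> t"
    show "norm (f t) \<le> max 1 B'"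
    proof (cases "t \<le> max T 0")
      case True thus ?thesis using B'[of "f t"] t by force
    next
      case False thus ?thesis using T[of t] by force
    qed
  qed
  thus ?thesis by (intro exI[of _ "max 1 B'"]) auto
qed

lemma f'_int: "0 \<le> a \<Longrightarrow> f' integrable_on {a..b}"
  by (rule integrable_continuous_interval, rule continuous_on_subset[OF f'c]) auto

lemma nf'_int: "0 \<le> a \<Longrightarrow> (\<lambda>u. norm (f' u)) integrable_on {a..b}"
  by (rule integrable_continuous_interval, rule continuous_on_norm, rule continuous_on_subset[OF f'c]) auto

lemma f_int: "0 \<le> a \<Longrightarrow> f integrable_on {a..b}"
  by (rule integrable_continuous_interval, rule continuous_on_subset[OF fc]) auto

lemma FTC_f: "0 \<le> a \<Longrightarrow> a \<le> b \<Longrightarrow> (f' has_integral (f b - f a)) {a..b}"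
  by (rule fundamental_theorem_of_calculus)
     (auto intro!: has_vector_derivative_within_subset[OF fd])

lemma diff_bound:
  assumes "0 \<le> a" "a \<le> t" "t \<le> b"
  shows "norm (f t - f a) \<le> integral {a..b} (\<lambda>u. norm (f' u))"
proof -
  have "f t - f a = integral {a..t} f'" using FTC_f[of a t] assms by (simp add: integral_unique)
  also have "norm \<dots> \<le> integral {a..t} (\<lambda>u. norm (f' u))"
    by (rule Henstock_Kurzweil_Integration.integral_norm_bound_integral) (use assms f'_int nf'_int in auto)
  also have "\<dots> \<le> integral {a..b} (\<lambda>u. norm (f' u))"
    by (rule integral_subset_le) (use assms nf'_int in auto)
  finally show ?thesis .
qed

lemma PI:
  assumes a: "0 \<le> a" and x: "0 < x"
  shows "norm (of_real x * f a - integral {a..a+x} f) \<le> x * integral {a..a+x} (\<lambda>u. norm (f' u))"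
proof -
  define V where "V = integral {a..a+x} (\<lambda>u. norm (f' u))"
  have c: "integral {a..a+x} (\<lambda>t. f a) = of_real x * f a"
    using x by (simp add: content_real scaleR_conv_of_real)
  have "integral {a..a+x} (\<lambda>t. f a - f t) = integral {a..a+x} (\<lambda>t. f a) - integral {a..a+x} f"
    by (rule integral_diff) (use f_int[OF a] in auto)
  hence "of_real x * f a - integral {a..a+x} f = integral {a..a+x} (\<lambda>t. f a - f t)"
    unfolding c by simp
  also have "norm \<dots> \<le> integral {a..a+x} (\<lambda>t. V)"
  proof (rule Henstock_Kurzweil_Integration.integral_norm_bound_integral)
    show "(\<lambda>t. f a - f t) integrable_on {a..a+x}"
      using f_int[OF a] by (intro integrable_diff) auto
    show "(\<lambda>t. V) integrable_on {a..a+x}" by (rule integrable_const_ivl)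
    fix t assume "t \<in> {a..a+x}"
    thus "norm (f a - f t) \<le> V" unfolding V_def using diff_bound[of a t "a+x"] a
      by (simp add: norm_minus_commute)
  qed
  also have "\<dots> = x * V" using x by (simp add: content_real)
  finally show ?thesis unfolding V_def .
qed

lemma nf'_absint: "set_integrable lborel {0<..} (\<lambda>t. norm (f' t))"
proof -
  have a: "set_integrable lborel {0<..1} (\<lambda>t. norm (f' t))"
  proof (rule set_integrable_subset)
    show "set_integrable lborel {0..1} (\<lambda>t. norm (f' t))"
      by (rule borel_integrable_atLeastAtMost', rule continuous_on_norm, rule continuous_on_subset[OF f'c]) auto
  qed auto
  have b: "set_integrable lborel {1<..} (\<lambda>t. norm (f' t))"
  proof (rule set_integrable_bound[where f = "\<lambda>t. complex_of_real t * f' t"])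
    show "set_integrable lborel {1<..} (\<lambda>t. complex_of_real t * f' t)"
      by (rule set_integrable_subset[OF tf'i]) auto
    show "set_borel_measurable lborel {1<..} (\<lambda>t. norm (f' t))"
      unfolding set_borel_measurable_def measurable_lborel2
      by (rule borel_measurable_continuous_on_indicator)
         (auto intro!: continuous_on_norm continuous_on_subset[OF f'c])
    show "AE x in lborel. x \<in> {1<..} \<longrightarrow> norm (norm (f' x)) \<le> norm (complex_of_real x * f' x)"
    proof (rule AE_I2, intro impI)
      fix x :: real assume "x \<in> {1<..}"
      hence "norm (f' x) \<le> x * norm (f' x)" by (simp add: mult_le_cancel_right1)
      thus "norm (norm (f' x)) \<le> norm (complex_of_real x * f' x)" using \<open>x \<in> {1<..}\<close> by (simp add: norm_mult)
    qed
  qed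
  have "{0<..} = {0<..1} \<union> ({1<..} :: real set)" by auto
  thus ?thesis using set_integrable_Un[OF a b] by simp
qed

lemma tnf'_absint: "set_integrable lborel {0<..} (\<lambda>t. norm (complex_of_real t * f' t))"
  by (rule set_integrable_norm[OF tf'i])

lemma nf_absint: "set_integrable lborel {0<..} (\<lambda>t. norm (f t))"
  by (rule set_integrable_norm[OF fi])

lemma HK_le_LINT:
  fixes h :: "real \<Rightarrow> real"
  assumes hc: "continuous_on {0..} h" and h0: "\<And>t. 0 \<le> t \<Longrightarrow> 0 \<le> h t"
    and hi: "set_integrable lborel {0<..} h" and a: "0 \<le> a" and ab: "a \<le> b"
  shows "integral {a..b} h \<le> (LINT t:{0<..}|lborel. h t)"
proof -
  have i1: "h integrable_on {0<..}" and e1: "(LINT t:{0<..}|lborel. h t) = integral {0<..} h"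
    using set_borel_integral_eq_integral[OF hi] by auto
  have neg1: "negligible {x \<in> {0<..} - {0..}. h x \<noteq> 0}"
    by (rule negligible_subset[of "{}"]) auto
  have neg2: "negligible {x \<in> {0..} - {0<..}. h x \<noteq> 0}"
    by (rule negligible_subset[of "{0}"]) auto
  have i2: "h integrable_on {0..}"
    by (rule integrable_spike_set[OF i1 neg1 neg2])
  have e2: "integral {0..} h = integral {0<..} h"
    by (rule integral_spike_set[OF neg2 neg1])
  have "integral {a..b} h \<le> integral {0..} h"
  proof (rule integral_subset_le)
    show "h integrable_on {a..b}"
      by (rule integrable_continuous_interval, rule continuous_on_subset[OF hc]) (use a in auto)
  qed (use a i2 h0 in auto)
  thus ?thesis using e1 e2 by simp
qed

definition Af where "Af = (LINT t:{0<..}|lborel. norm (f' t))"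
definition Kf where "Kf = (LINT t:{0<..}|lborel. norm (complex_of_real t * f' t))"
definition Lf1 where "Lf1 = (LINT t:{0<..}|lborel. norm (f t))"
definition Lf where "Lf = (LINT t:{0<..}|lborel. f t)"
definition IF where "IF y = integral {0..y} f" for y

lemma nf'_le_Af: "0 \<le> a \<Longrightarrow> a \<le> b \<Longrightarrow> integral {a..b} (\<lambda>t. norm (f' t)) \<le> Af"
  unfolding Af_def
  by (rule HK_le_LINT[OF _ _ nf'_absint]) (auto intro!: continuous_on_norm f'c)

lemma tnf'_le_Kf: "0 \<le> a \<Longrightarrow> a \<le> b \<Longrightarrow> integral {a..b} (\<lambda>t. norm (complex_of_real t * f' t)) \<le> Kf"
  unfolding Kf_def
  by (rule HK_le_LINT[OF _ _ tnf'_absint])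
     (auto intro!: continuous_on_norm continuous_intros continuous_on_subset[OF f'c])

lemma nf_le_Lf1: "0 \<le> a \<Longrightarrow> a \<le> b \<Longrightarrow> integral {a..b} (\<lambda>t. norm (f t)) \<le> Lf1"
  unfolding Lf1_def
  by (rule HK_le_LINT[OF _ _ nf_absint]) (auto intro!: continuous_on_norm fc)

lemma IF_bound1: "0 \<le> y \<Longrightarrow> norm (IF y) \<le> Lf1"
proof -
  assume y: "0 \<le> y"
  have "norm (IF y) \<le> integral {0..y} (\<lambda>t. norm (f t))"
    unfolding IF_def
    by (rule Henstock_Kurzweil_Integration.integral_norm_bound_integral)
       (auto intro!: f_int integrable_continuous_interval continuous_on_norm continuous_on_subset[OF fc])
  also have "\<dots> \<le> Lf1" by (rule nf_le_Lf1) (use y in auto)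
  finally show ?thesis .
qed

lemma IF_bound2:
  assumes B: "\<forall>t\<ge>0. norm (f t) \<le> B" and y: "0 \<le> y"
  shows "norm (IF y) \<le> y * B"
proof -
  have "norm (IF y) \<le> integral {0..y} (\<lambda>t. B)"
    unfolding IF_def
    by (rule Henstock_Kurzweil_Integration.integral_norm_bound_integral) (use B in \<open>auto intro!: f_int\<close>)
  also have "\<dots> = y * B" using y by (simp add: content_real)
  finally show ?thesis .
qed

lemma fi0: "set_integrable lborel {0..} f"
proof -
  have a: "set_integrable lborel {0..1} f"
    by (rule borel_integrable_atLeastAtMost', rule continuous_on_subset[OF fc]) auto
  have "{0..} = {0..1} \<union> ({0<..} :: real set)" by auto
  thus ?thesis using set_integrable_Un[OF a fi] by simp
qed

lemma IF_lim: "(IF \<longlongrightarrow> Lf) at_top"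
proof -
  have "((\<lambda>b. LINT t:{0..b}|lborel. f t) \<longlongrightarrow> (LINT t:{0..}|lborel. f t)) at_top"
    by (rule tendsto_set_lebesgue_integral_at_top[OF _ fi0]) auto
  moreover have "(LINT t:{0..}|lborel. f t) = Lf"
    unfolding Lf_def by (rule set_integral_discrete_difference[where X="{0}"]) auto
  moreover have "\<forall>\<^sub>F b in at_top. (LINT t:{0..b}|lborel. f t) = IF b"
  proof (rule eventually_at_top_linorderI[of 0])
    fix b :: real assume "0 \<le> b"
    show "(LINT t:{0..b}|lborel. f t) = IF b"
      unfolding IF_def
      by (rule set_borel_integral_eq_integral(2), rule borel_integrable_atLeastAtMost',
          rule continuous_on_subset[OF fc]) auto
  qed
  ultimately show ?thesis using tendsto_cong by fastforce
qed

lemma sum_integral_combine: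
  fixes h :: "real \<Rightarrow> 'a::banach"
  assumes hi: "\<And>b. h integrable_on {a..b}" and x: "0 \<le> x"
  shows "(\<Sum>n<N. integral {a + real n * x .. a + real n * x + x} h) = integral {a..a + real N * x} h"
proof (induction N)
  case 0 then show ?case by simp
next
  case (Suc N)
  have "(\<Sum>n<Suc N. integral {a + real n * x .. a + real n * x + x} h)
        = integral {a..a + real N * x} h + integral {a + real N * x .. a + real N * x + x} h"
    using Suc.IH by simp
  also have "\<dots> = integral {a..a + real N * x + x} h"
    by (rule Henstock_Kurzweil_Integration.integral_combine) (use x hi in auto)
  finally show ?case by (simp add: algebra_simps)
qed

lemma Af_nonneg: "0 \<le> Af" using nf'_le_Af[of 0 0] by simp
lemma Kf_nonneg: "0 \<le> Kf" using tnf'_le_Kf[of 0 0] by simp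
lemma Lf1_nonneg: "0 \<le> Lf1" using nf_le_Lf1[of 0 0] by simp

definition dd where
  "dd x n = of_real x * f (x + real n * x) - integral {x + real n * x .. x + real n * x + x} f"

lemma dd_sum: "0 < x \<Longrightarrow> (\<Sum>n<N. dd x n) = of_real x * (\<Sum>n<N. f (x + real n * x)) - integral {x..x + real N * x} f"
  unfolding dd_def sum_subtractf sum_distrib_left
  by (subst sum_integral_combine) (auto intro: f_int)

lemma dd_bound1: "0 < x \<Longrightarrow> norm (dd x n) \<le> x * integral {x + real n * x .. x + real n * x + x} (\<lambda>u. norm (f' u))"
  unfolding dd_def by (rule PI) auto

lemma dd_bound2:
  assumes x: "0 < x"
  shows "x * integral {x + real n * x .. x + real n * x + x} (\<lambda>u. norm (f' u))
         \<le> integral {x + real n * x .. x + real n * x + x} (\<lambda>u. norm (complex_of_real u * f' u))"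
proof -
  have "x * integral {x + real n * x .. x + real n * x + x} (\<lambda>u. norm (f' u))
        = integral {x + real n * x .. x + real n * x + x} (\<lambda>u. x * norm (f' u))"
    by simp
  also have "\<dots> \<le> integral {x + real n * x .. x + real n * x + x} (\<lambda>u. norm (complex_of_real u * f' u))"
  proof (rule integral_le)
    show "(\<lambda>u. x * norm (f' u)) integrable_on {x + real n * x .. x + real n * x + x}"
      using x by (intro integrable_on_mult_right nf'_int) simp
    show "(\<lambda>u. norm (complex_of_real u * f' u)) integrable_on {x + real n * x .. x + real n * x + x}"
      using x by (intro integrable_continuous_interval continuous_on_norm continuous_intros
                    continuous_on_subset[OF f'c]) auto
    fix u assume u: "u \<in> {x + real n * x .. x + real n * x + x}"
    have h1: "0 \<le> real n * x" using x by simp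
    have h2: "x + real n * x \<le> u" using u by simp
    from h1 h2 have "x \<le> u" by linarith
    hence "x * norm (f' u) \<le> u * norm (f' u)" by (intro mult_right_mono) auto
    thus "x * norm (f' u) \<le> norm (complex_of_real u * f' u)" using \<open>x \<le> u\<close> x by (simp add: norm_mult)
  qed
  finally show ?thesis .
qed

lemma dd_sum_bound1: "0 < x \<Longrightarrow> (\<Sum>n<N. norm (dd x n)) \<le> x * Af"
proof -
  assume x: "0 < x"
  have "(\<Sum>n<N. norm (dd x n)) \<le> (\<Sum>n<N. x * integral {x + real n * x .. x + real n * x + x} (\<lambda>u. norm (f' u)))"
    by (intro sum_mono dd_bound1 x)
  also have "\<dots> = x * integral {x..x + real N * x} (\<lambda>u. norm (f' u))"
    unfolding sum_distrib_left[symmetric] using x by (subst sum_integral_combine) (auto intro: nf'_int)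
  also have "\<dots> \<le> x * Af" using x by (intro mult_left_mono nf'_le_Af) auto
  finally show ?thesis .
qed

lemma dd_sum_bound2: "0 < x \<Longrightarrow> (\<Sum>n<N. norm (dd x n)) \<le> Kf"
proof -
  assume x: "0 < x"
  have "(\<Sum>n<N. norm (dd x n)) \<le> (\<Sum>n<N. integral {x + real n * x .. x + real n * x + x} (\<lambda>u. norm (complex_of_real u * f' u)))"
    by (intro sum_mono order.trans[OF dd_bound1 dd_bound2] x)
  also have "\<dots> = integral {x..x + real N * x} (\<lambda>u. norm (complex_of_real u * f' u))"
    using x by (subst sum_integral_combine)
      (auto intro!: integrable_continuous_interval continuous_on_norm continuous_intros continuous_on_subset[OF f'c])
  also have "\<dots> \<le> Kf" using x by (intro tnf'_le_Kf) auto
  finally show ?thesis .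
qed

definition PN where
  "PN N x = (\<Sum>n<N. f (real (Suc n) * x)) - complex_of_real (1/x) * IF (real (N+1) * x)"

lemma Suc_mult_eq: "real (Suc n) * x = x + real n * x"
  by (simp add: algebra_simps)

lemma PN_eq:
  assumes x: "0 < x"
  shows "of_real x * PN N x = (\<Sum>n<N. dd x n) - IF x"
proof -
  have "integral {0..x} f + integral {x..x + real N * x} f = integral {0..x + real N * x} f"
    by (rule Henstock_Kurzweil_Integration.integral_combine) (use x in \<open>auto intro: f_int\<close>)
  moreover have "real (N+1) * x = x + real N * x" by (simp add: algebra_simps)
  ultimately have "IF (real (N+1) * x) = IF x + integral {x..x + real N * x} f"
    unfolding IF_def by simp
  thus ?thesis
    unfolding PN_def dd_sum[OF x] Suc_mult_eq using x by (simp add: algebra_simps)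
qed

lemma PN_bound:
  assumes B: "\<forall>t\<ge>0. norm (f t) \<le> B" and x: "0 < x"
  shows "norm (PN N x) \<le> Af + B" "norm (PN N x) \<le> (Kf + Lf1) / x"
proof -
  have n: "norm (of_real x * PN N x) \<le> (\<Sum>n<N. norm (dd x n)) + norm (IF x)"
    unfolding PN_eq[OF x]
    by (rule order.trans[OF norm_triangle_ineq4]) (intro add_mono norm_sum order.refl)
  have "x * norm (PN N x) \<le> x * Af + x * B"
    using n dd_sum_bound1[OF x, of N] IF_bound2[OF B, of x] x by (simp add: norm_mult)
  hence "x * norm (PN N x) \<le> x * (Af + B)" by (simp add: algebra_simps)
  thus "norm (PN N x) \<le> Af + B" using x by simp
  have "x * norm (PN N x) \<le> Kf + Lf1"
    using n dd_sum_bound2[OF x, of N] IF_bound1[of x] x by (simp add: norm_mult)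
  thus "norm (PN N x) \<le> (Kf + Lf1) / x" using x by (simp add: field_simps)
qed

lemma P_conv:
  assumes x: "0 < x"
  shows "summable (\<lambda>n. f (real (Suc n) * x))" "(\<lambda>N. PN N x) \<longlonglongrightarrow> Pop f x"
proof -
  have sd: "summable (\<lambda>n. norm (dd x n))"
    by (rule summableI_nonneg_bounded[where x = "x * Af"]) (use dd_sum_bound1[OF x] in auto)
  hence ld: "(\<lambda>N. \<Sum>n<N. dd x n) \<longlonglongrightarrow> suminf (dd x)"
    using summable_LIMSEQ summable_norm_cancel by blast
  have fl: "filterlim (\<lambda>N. x + real N * x) at_top sequentially"
  proof -
    have "filterlim (\<lambda>N. x * real N) at_top sequentially"
      by (rule filterlim_tendsto_pos_mult_at_top[OF tendsto_const x filterlim_real_sequentially])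
    from filterlim_tendsto_add_at_top[OF tendsto_const this]
    have "filterlim (\<lambda>N. x + x * real N) at_top sequentially" .
    thus ?thesis by (simp add: algebra_simps)
  qed
  have li: "(\<lambda>N. IF (x + real N * x)) \<longlonglongrightarrow> Lf"
    by (rule filterlim_compose[OF IF_lim fl])
  have eqs: "(\<Sum>n<N. f (real (Suc n) * x)) = (1 / of_real x) * ((\<Sum>n<N. dd x n) + (IF (x + real N * x) - IF x))" for N
  proof -
    have "integral {0..x} f + integral {x..x + real N * x} f = integral {0..x + real N * x} f"
      by (rule Henstock_Kurzweil_Integration.integral_combine) (use x in \<open>auto intro: f_int\<close>)
    hence "IF (x + real N * x) = IF x + integral {x..x + real N * x} f"
      unfolding IF_def by simp
    thus ?thesis unfolding dd_sum[OF x] Suc_mult_eq using x by (simp add: field_simps)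
  qed
  have lim: "(\<lambda>N. \<Sum>n<N. f (real (Suc n) * x)) \<longlonglongrightarrow> (1 / of_real x) * (suminf (dd x) + (Lf - IF x))"
    unfolding eqs by (intro tendsto_intros ld li)
  thus sf: "summable (\<lambda>n. f (real (Suc n) * x))"
    by (auto simp: summable_def sums_def)
  have "(\<lambda>N. PN N x) \<longlonglongrightarrow> (\<Sum>n. f (real (Suc n) * x)) - complex_of_real (1/x) * Lf"
  proof -
    have l1: "(\<lambda>N. \<Sum>n<N. f (real (Suc n) * x)) \<longlonglongrightarrow> (\<Sum>n. f (real (Suc n) * x))"
      using sf by (simp add: summable_LIMSEQ)
    have fl2: "filterlim (\<lambda>N. real (N+1) * x) at_top sequentially"
      using fl by (simp add: algebra_simps)
    have l2: "(\<lambda>N. IF (real (N+1) * x)) \<longlonglongrightarrow> Lf"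
      by (rule filterlim_compose[OF IF_lim fl2])
    show ?thesis unfolding PN_def by (intro tendsto_intros l1 l2)
  qed
  thus "(\<lambda>N. PN N x) \<longlonglongrightarrow> Pop f x" unfolding Pop_def Lf_def .
qed

lemma f_isCont: "0 < y \<Longrightarrow> isCont f y"
proof -
  assume y: "0 < y"
  have "at y within {0..} = at y" by (rule at_within_interior) (use y in simp)
  thus ?thesis using has_vector_derivative_continuous[OF fd[of y]] y by (simp add: continuous_at)
qed

lemma IF_deriv: "0 < y \<Longrightarrow> (IF has_vector_derivative f y) (at y)"
proof -
  assume y: "0 < y"
  have "((\<lambda>u. integral {0..u} f) has_vector_derivative f y) (at y within {0..y+1})"
    by (rule integral_has_vector_derivative, rule continuous_on_subset[OF fc]) (use y in auto)
  moreover have "at y within {0..y+1} = at y" by (rule at_within_interior) (use y in simp)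
  ultimately show ?thesis unfolding IF_def[abs_def] by simp
qed

lemma IF_isCont: "0 < y \<Longrightarrow> isCont IF y"
  using has_vector_derivative_continuous[OF IF_deriv] by (simp add: continuous_at)

lemma IF_cont: "continuous_on {0<..} IF"
  by (intro continuous_at_imp_continuous_on ballI IF_isCont) simp

lemma f_cont0: "continuous_on {0<..} f"
  by (intro continuous_at_imp_continuous_on ballI f_isCont) simp

lemma ofreal_nonpos: "0 < y \<Longrightarrow> complex_of_real y \<notin> \<real>\<^sub>\<le>\<^sub>0"
  by (simp add: complex_nonpos_Reals_iff)

lemma cont_powr: "continuous_on {0<..} (\<lambda>y. complex_of_real y powr z)"
  by (intro continuous_at_imp_continuous_on ballI isCont_powr_complex continuous_intros ofreal_nonpos) auto

definition Jf where "Jf y = complex_of_real (1 / y) * IF y" for y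

context
  fixes s :: complex
  assumes s0: "0 < Re s" and s1: "Re s < 1"
begin

lemma mf_int: "set_integrable lborel {0<..} (\<lambda>t. complex_of_real t powr (s - 1) * f t)"
proof -
  obtain B where B0: "0 \<le> B" and B: "\<forall>t\<ge>0. norm (f t) \<le> B" using fbound by blast
  show ?thesis
  proof (rule set_integrable_bound[where f = "\<lambda>t. B * wdom (Re s) t + norm (f t)"])
    show "set_integrable lborel {0<..} (\<lambda>t. B * wdom (Re s) t + norm (f t))"
      by (intro set_integral_add(1) set_integrable_mult_right wdom_int nf_absint) (use s0 s1 in auto)
    show "set_borel_measurable lborel {0<..} (\<lambda>t. complex_of_real t powr (s - 1) * f t)"
      unfolding set_borel_measurable_def measurable_lborel2
      by (rule borel_measurable_continuous_on_indicator) (auto intro!: continuous_intros cont_powr f_cont0)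
    show "AE t in lborel. t \<in> {0<..} \<longrightarrow> norm (complex_of_real t powr (s - 1) * f t) \<le> norm (B * wdom (Re s) t + norm (f t))"
    proof (rule AE_I2, intro impI)
      fix t :: real assume t: "t \<in> {0<..}"
      have nn: "0 \<le> B * wdom (Re s) t + norm (f t)" using B0 wdom_nonneg[of t] t by simp
      have "norm (complex_of_real t powr (s - 1) * f t) = t powr (Re s - 1) * norm (f t)"
        using t by (simp add: norm_mult norm_ofreal_powr)
      also have "\<dots> \<le> B * wdom (Re s) t + norm (f t)"
      proof (cases "t \<le> 1")
        case True
        hence "wdom (Re s) t = t powr (Re s - 1)" unfolding wdom_def using t by (simp add: min_def)
        moreover have "t powr (Re s - 1) * norm (f t) \<le> t powr (Re s - 1) * B"
          using B t by (intro mult_left_mono) auto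
        ultimately have "t powr (Re s - 1) * norm (f t) \<le> B * wdom (Re s) t" by (simp add: mult.commute)
        thus ?thesis using norm_ge_zero[of "f t"] by linarith
      next
        case False
        hence "t powr (Re s - 1) \<le> t powr 0" using s1 by (intro powr_mono) auto
        hence "t powr (Re s - 1) \<le> 1" using t by simp
        hence "t powr (Re s - 1) * norm (f t) \<le> norm (f t)" by (simp add: mult_left_le_one_le)
        moreover have "0 \<le> B * wdom (Re s) t" using B0 wdom_nonneg[of t] t by simp
        ultimately show ?thesis by linarith
      qed
      finally show "norm (complex_of_real t powr (s - 1) * f t) \<le> norm (B * wdom (Re s) t + norm (f t))"
        using nn by simp
    qed
  qed
qed

lemma mJ_int: "set_integrable lborel {0<..} (\<lambda>y. complex_of_real y powr (s - 1) * Jf y)"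
proof -
  obtain B where B0: "0 \<le> B" and B: "\<forall>t\<ge>0. norm (f t) \<le> B" using fbound by blast
  define C where "C = max B Lf1"
  show ?thesis
  proof (rule set_integrable_bound[where f = "\<lambda>y. C * wdom (Re s) y"])
    show "set_integrable lborel {0<..} (\<lambda>y. C * wdom (Re s) y)"
      by (intro set_integrable_mult_right wdom_int) (use s0 s1 in auto)
    show "set_borel_measurable lborel {0<..} (\<lambda>y. complex_of_real y powr (s - 1) * Jf y)"
      unfolding set_borel_measurable_def measurable_lborel2 Jf_def
      by (rule borel_measurable_continuous_on_indicator) (auto intro!: continuous_intros cont_powr IF_cont)
    show "AE y in lborel. y \<in> {0<..} \<longrightarrow> norm (complex_of_real y powr (s - 1) * Jf y) \<le> norm (C * wdom (Re s) y)"
    proof (rule AE_I2, intro impI)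
      fix y :: real assume y: "y \<in> {0<..}"
      have C0: "0 \<le> C" using B0 unfolding C_def by simp
      have key: "(1 / y) * norm (IF y) \<le> C * min 1 (1 / y)"
      proof (cases "y \<le> 1")
        case True
        have "(1 / y) * norm (IF y) \<le> (1 / y) * (y * B)"
          using IF_bound2[OF B, of y] y by (intro mult_left_mono) auto
        also have "\<dots> = B" using y by simp
        also have "\<dots> \<le> C * min 1 (1 / y)" using True y unfolding C_def by (simp add: min_def)
        finally show ?thesis .
      next
        case False
        have "(1 / y) * norm (IF y) \<le> (1 / y) * Lf1"
          using IF_bound1[of y] y by (intro mult_left_mono) auto
        also have "\<dots> \<le> (1 / y) * C" using y unfolding C_def by (intro mult_left_mono) auto
        also have "\<dots> = C * min 1 (1 / y)" using False y by (simp add: min_def)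
        finally show ?thesis .
      qed
      have "norm (complex_of_real y powr (s - 1) * Jf y) = y powr (Re s - 1) * ((1 / y) * norm (IF y))"
        using y unfolding Jf_def by (simp add: norm_mult norm_ofreal_powr norm_divide)
      also have "\<dots> \<le> y powr (Re s - 1) * (C * min 1 (1 / y))"
        by (intro mult_left_mono key) auto
      also have "\<dots> = C * wdom (Re s) y" unfolding wdom_def by simp
      also have "\<dots> = norm (C * wdom (Re s) y)" using C0 wdom_nonneg[of y] y by simp
      finally show "norm (complex_of_real y powr (s - 1) * Jf y) \<le> norm (C * wdom (Re s) y)" .
    qed
  qed
qed

lemma mJ_eq: "(LINT y:{0<..}|lborel. complex_of_real y powr (s - 1) * Jf y) = mellin f s / (1 - s)"
proof -
  obtain B where B0: "0 \<le> B" and B: "\<forall>t\<ge>0. norm (f t) \<le> B" using fbound by blast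
  define F where "F y = complex_of_real y powr (s - 1) * IF y" for y
  define G where "G y = (s - 1) * (complex_of_real y powr (s - 1) * Jf y) + complex_of_real y powr (s - 1) * f y" for y
  have deriv: "(F has_vector_derivative G y) (at y)" if y: "0 < ereal y" "ereal y < \<infinity>" for y
  proof -
    have y0: "0 < y" using y by simp
    have d1: "((\<lambda>x. complex_of_real x powr (s - 1)) has_vector_derivative ((s - 1) * complex_of_real y powr (s - 1 - 1))) (at y)"
      using has_vector_derivative_real_field[OF has_field_derivative_powr[OF ofreal_nonpos[OF y0], where s="s - 1"], where s=UNIV] by simp
    from has_vector_derivative_mult[OF d1 IF_deriv[OF y0]]
    have "(F has_vector_derivative (complex_of_real y powr (s - 1) * f y + (s - 1) * complex_of_real y powr (s - 1 - 1) * IF y)) (at y)"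
      unfolding F_def[abs_def] .
    moreover have p2: "complex_of_real y powr (s - 1 - 1) = complex_of_real y powr (s - 1) / complex_of_real y"
      using y0 by (simp add: powr_diff power2_eq_square)
    have "complex_of_real y powr (s - 1) * f y + (s - 1) * complex_of_real y powr (s - 1 - 1) * IF y = G y"
      unfolding G_def Jf_def p2 using y0 by (simp add: field_simps)
    ultimately show ?thesis by simp
  qed
  have cont: "isCont G y" if y: "0 < ereal y" "ereal y < \<infinity>" for y
  proof -
    have y0: "0 < y" using y by simp
    show ?thesis unfolding G_def[abs_def] Jf_def
      by (intro continuous_intros isCont_powr_complex ofreal_nonpos y0 IF_isCont f_isCont) (use y0 in auto)
  qed
  have Gi: "set_integrable lborel (einterval 0 \<infinity>) G"
  proof -
    have "set_integrable lborel {0<..} G"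
      unfolding G_def by (intro set_integral_add(1) set_integrable_mult_right mJ_int mf_int)
    thus ?thesis by (simp add: zero_ereal_def)
  qed
  have lim0: "((F \<circ> real_of_ereal) \<longlongrightarrow> 0) (at_right 0)"
  proof -
    have "(F \<longlongrightarrow> 0) (at_right 0)"
    proof (rule Lim_null_comparison)
      show "\<forall>\<^sub>F y in at_right 0. norm (F y) \<le> B * y powr Re s"
      proof (rule eventually_mono[OF eventually_at_right_less])
        fix y :: real assume y: "0 < y"
        have "norm (F y) = y powr (Re s - 1) * norm (IF y)" unfolding F_def using y by (simp add: norm_mult norm_ofreal_powr)
        also have "\<dots> \<le> y powr (Re s - 1) * (y * B)" using IF_bound2[OF B, of y] y by (intro mult_left_mono) auto
        also have "y powr (Re s - 1) * y = y powr Re s" using y by (simp add: powr_diff)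
        hence "y powr (Re s - 1) * (y * B) = B * y powr Re s" by (simp add: mult_ac)
        finally show "norm (F y) \<le> B * y powr Re s" .
      qed
      have "((\<lambda>y::real. y powr Re s) \<longlongrightarrow> 0) (at_right 0)"
        by (rule tendsto_zero_powrI[OF tendsto_ident_at tendsto_const]) (use s0 in \<open>auto simp: eventually_at_right_less eventually_mono[OF eventually_at_right_less]\<close>)
      from tendsto_mult[OF tendsto_const[of B] this]
      show "((\<lambda>y. B * y powr Re s) \<longlongrightarrow> 0) (at_right 0)" by simp
    qed
    thus ?thesis by (simp add: zero_ereal_def ereal_tendsto_simps)
  qed
  have liminf: "((F \<circ> real_of_ereal) \<longlongrightarrow> 0) (at_left \<infinity>)"
  proof -
    have "(F \<longlongrightarrow> 0) at_top"
    proof (rule Lim_null_comparison)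
      show "\<forall>\<^sub>F y in at_top. norm (F y) \<le> Lf1 * y powr (Re s - 1)"
      proof (rule eventually_mono[OF eventually_gt_at_top[of 0]])
        fix y :: real assume y: "0 < y"
        have "norm (F y) = y powr (Re s - 1) * norm (IF y)" unfolding F_def using y by (simp add: norm_mult norm_ofreal_powr)
        also have "\<dots> \<le> y powr (Re s - 1) * Lf1" using IF_bound1[of y] y by (intro mult_left_mono) auto
        finally show "norm (F y) \<le> Lf1 * y powr (Re s - 1)" by (simp add: mult.commute)
      qed
      have "((\<lambda>y::real. y powr (Re s - 1)) \<longlongrightarrow> 0) at_top"
        by (rule tendsto_neg_powr[OF _ filterlim_ident]) (use s1 in simp)
      from tendsto_mult[OF tendsto_const[of Lf1] this]
      show "((\<lambda>y. Lf1 * y powr (Re s - 1)) \<longlongrightarrow> 0) at_top" by simp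
    qed
    thus ?thesis by (simp add: ereal_tendsto_simps)
  qed
  have "(LBINT y=0..\<infinity>. G y) = 0 - 0"
    by (rule interval_integral_FTC_integrable[OF _ deriv cont Gi lim0 liminf]) simp_all
  hence "(LINT y:{0<..}|lborel. G y) = 0" by (simp add: interval_lebesgue_integral_0_infty)
  moreover have "(LINT y:{0<..}|lborel. G y) = (s - 1) * (LINT y:{0<..}|lborel. complex_of_real y powr (s - 1) * Jf y) + mellin f s"
    unfolding G_def mellin_def
    by (subst set_integral_add(2)) (auto intro!: set_integrable_mult_right mJ_int mf_int)
  ultimately have "(s - 1) * (LINT y:{0<..}|lborel. complex_of_real y powr (s - 1) * Jf y) + mellin f s = 0" by simp
  moreover have "1 - s \<noteq> 0" using s1 by auto
  ultimately show ?thesis by (simp add: field_simps)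
qed

lemma mPN:
  shows "set_integrable lborel {0<..} (\<lambda>x. complex_of_real x powr (s - 1) * PN N x)"
    and "(LINT x:{0<..}|lborel. complex_of_real x powr (s - 1) * PN N x)
           = ((\<Sum>n<N. of_nat (Suc n) powr (-s)) - of_nat (N+1) powr (1 - s) / (1 - s)) * mellin f s"
proof -
  define M where "M = real (N+1)"
  have M0: "0 < M" unfolding M_def by simp
  define A where "A x = (\<Sum>n<N. complex_of_real x powr (s - 1) * f (real (Suc n) * x))" for x
  define Bj where "Bj x = complex_of_real M * (complex_of_real x powr (s - 1) * Jf (M * x))" for x
  have eq: "complex_of_real x powr (s - 1) * PN N x = A x - Bj x" if x: "x \<in> {0<..}" for x
  proof -
    have "complex_of_real (1 / x) * IF (M * x) = complex_of_real M * Jf (M * x)"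
      unfolding Jf_def using x M0 by (simp add: field_simps)
    thus ?thesis unfolding PN_def A_def Bj_def M_def by (simp add: sum_distrib_left algebra_simps)
  qed
  have Ai: "set_integrable lborel {0<..} A"
    and Aeq: "(LINT x:{0<..}|lborel. A x) = (\<Sum>n<N. of_nat (Suc n) powr (-s)) * mellin f s"
  proof -
    have i: "set_integrable lborel {0<..} (\<lambda>x. complex_of_real x powr (s - 1) * f (real (Suc n) * x))" for n
      by (rule mellin_scale(1)[OF _ mf_int]) simp
    show "set_integrable lborel {0<..} A" unfolding A_def[abs_def] by (rule set_integral_sum_gen(1)) (use i in auto)
    have "(LINT x:{0<..}|lborel. A x) = (\<Sum>n<N. LINT x:{0<..}|lborel. complex_of_real x powr (s - 1) * f (real (Suc n) * x))"
      unfolding A_def by (rule set_integral_sum_gen(2)) (use i in auto)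
    also have "\<dots> = (\<Sum>n<N. of_nat (Suc n) powr (-s) * mellin f s)"
    proof (rule sum.cong[OF refl])
      fix n
      have "(LINT x:{0<..}|lborel. complex_of_real x powr (s - 1) * f (real (Suc n) * x))
            = complex_of_real (real (Suc n)) powr (-s) * mellin f s"
        unfolding mellin_def by (rule mellin_scale(2)[OF _ mf_int]) simp
      thus "(LINT x:{0<..}|lborel. complex_of_real x powr (s - 1) * f (real (Suc n) * x))
            = of_nat (Suc n) powr (-s) * mellin f s" by simp
    qed
    finally show "(LINT x:{0<..}|lborel. A x) = (\<Sum>n<N. of_nat (Suc n) powr (-s)) * mellin f s"
      by (simp add: sum_distrib_right)
  qed
  have Bi: "set_integrable lborel {0<..} Bj"
    and Beq: "(LINT x:{0<..}|lborel. Bj x) = of_nat (N+1) powr (1 - s) / (1 - s) * mellin f s"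
  proof -
    have i: "set_integrable lborel {0<..} (\<lambda>x. complex_of_real x powr (s - 1) * Jf (M * x))"
      by (rule mellin_scale(1)[OF M0 mJ_int])
    show "set_integrable lborel {0<..} Bj" unfolding Bj_def[abs_def] by (rule set_integrable_mult_right) (use i in auto)
    have "(LINT x:{0<..}|lborel. Bj x) = complex_of_real M * (LINT x:{0<..}|lborel. complex_of_real x powr (s - 1) * Jf (M * x))"
      unfolding Bj_def by simp
    also have "\<dots> = complex_of_real M * (complex_of_real M powr (-s) * (mellin f s / (1 - s)))"
      unfolding mellin_scale(2)[OF M0 mJ_int] mJ_eq ..
    also have "complex_of_real M * complex_of_real M powr (-s) = complex_of_real M powr (1 - s)"
    proof -
      have "complex_of_real M powr (1 - s) = complex_of_real M powr (1 + (-s))" by simp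
      also have "\<dots> = complex_of_real M powr 1 * complex_of_real M powr (-s)" by (rule powr_add)
      finally show ?thesis by simp
    qed
    hence "complex_of_real M * (complex_of_real M powr (-s) * (mellin f s / (1 - s)))
           = complex_of_real M powr (1 - s) * (mellin f s / (1 - s))" by (simp add: mult.assoc[symmetric])
    finally show "(LINT x:{0<..}|lborel. Bj x) = of_nat (N+1) powr (1 - s) / (1 - s) * mellin f s"
      unfolding M_def by simp
  qed
  have ABi: "set_integrable lborel {0<..} (\<lambda>x. A x - Bj x)" by (rule set_integral_diff(1)[OF Ai Bi])
  show "set_integrable lborel {0<..} (\<lambda>x. complex_of_real x powr (s - 1) * PN N x)"
    using ABi by (subst set_integrable_cong[OF refl refl eq]) auto
  have "(LINT x:{0<..}|lborel. complex_of_real x powr (s - 1) * PN N x) = (LINT x:{0<..}|lborel. A x - Bj x)"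
    by (rule set_lebesgue_integral_cong) (use eq in auto)
  also have "\<dots> = (LINT x:{0<..}|lborel. A x) - (LINT x:{0<..}|lborel. Bj x)" by (rule set_integral_diff(2)[OF Ai Bi])
  finally show "(LINT x:{0<..}|lborel. complex_of_real x powr (s - 1) * PN N x)
           = ((\<Sum>n<N. of_nat (Suc n) powr (-s)) - of_nat (N+1) powr (1 - s) / (1 - s)) * mellin f s"
    unfolding Aeq Beq by (simp add: algebra_simps)
qed

lemma PN_cont: "continuous_on {0<..} (PN N)"
  unfolding PN_def[abs_def]
  by (intro continuous_intros continuous_on_compose2[OF f_cont0] continuous_on_compose2[OF IF_cont]) auto

lemma mellin_Pop:
  shows "set_integrable lborel {0<..} (\<lambda>x. complex_of_real x powr (s - 1) * Pop f x)"
    and "(\<lambda>N. mellin (PN N) s) \<longlonglongrightarrow> mellin (Pop f) s"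
proof -
  obtain B where B0: "0 \<le> B" and B: "\<forall>t\<ge>0. norm (f t) \<le> B" using fbound by blast
  define C where "C = Af + B + Kf + Lf1"
  have C0: "0 \<le> C" unfolding C_def using Af_nonneg B0 Kf_nonneg Lf1_nonneg by simp
  define sN where "sN N x = indicator {0<..} x *\<^sub>R (complex_of_real x powr (s - 1) * PN N x)" for N x
  define g where "g x = indicator {0<..} x *\<^sub>R (complex_of_real x powr (s - 1) * Pop f x)" for x
  define w where "w x = indicator {0<..} x *\<^sub>R (C * wdom (Re s) x)" for x
  have sNm: "sN N \<in> borel_measurable lborel" for N
    unfolding sN_def[abs_def] measurable_lborel2
    by (rule borel_measurable_continuous_on_indicator) (auto intro!: continuous_intros cont_powr PN_cont)
  have lim: "(\<lambda>N. sN N x) \<longlonglongrightarrow> g x" for x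
  proof (cases "0 < x")
    case True
    show ?thesis unfolding sN_def g_def using True by (simp, intro tendsto_intros P_conv(2)) auto
  next
    case False thus ?thesis unfolding sN_def g_def by simp
  qed
  have gm: "g \<in> borel_measurable lborel"
    by (rule borel_measurable_LIMSEQ_metric[OF sNm lim])
  have wi: "integrable lborel w"
    using set_integrable_mult_right[OF wdom_int[OF s0 s1], of C] unfolding w_def set_integrable_def by simp
  have bnd: "norm (sN N x) \<le> w x" for N x
  proof (cases "0 < x")
    case True
    have pb: "norm (PN N x) \<le> C * min 1 (1 / x)"
    proof (cases "x \<le> 1")
      case True
      have "norm (PN N x) \<le> Af + B" by (rule PN_bound(1)[OF B \<open>0 < x\<close>])
      also have "\<dots> \<le> C" unfolding C_def using Kf_nonneg Lf1_nonneg by simp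
      finally show ?thesis using True \<open>0 < x\<close> by (simp add: min_def)
    next
      case False
      have "norm (PN N x) \<le> (Kf + Lf1) / x" by (rule PN_bound(2)[OF B \<open>0 < x\<close>])
      also have "\<dots> \<le> C / x" unfolding C_def using Af_nonneg B0 \<open>0 < x\<close> by (intro divide_right_mono) auto
      finally show ?thesis using False \<open>0 < x\<close> by (simp add: min_def)
    qed
    have "norm (sN N x) = x powr (Re s - 1) * norm (PN N x)"
      unfolding sN_def using True by (simp add: norm_mult norm_ofreal_powr)
    also have "\<dots> \<le> x powr (Re s - 1) * (C * min 1 (1 / x))" by (intro mult_left_mono pb) auto
    also have "\<dots> = w x" unfolding w_def wdom_def using True by simp
    finally show ?thesis .
  next
    case False thus ?thesis unfolding sN_def w_def by simp
  qed
  have gi: "integrable lborel g"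
    by (rule integrable_dominated_convergence[where s=sN, OF gm sNm wi]) (use lim bnd in auto)
  thus "set_integrable lborel {0<..} (\<lambda>x. complex_of_real x powr (s - 1) * Pop f x)"
    unfolding set_integrable_def g_def .
  have "(\<lambda>N. integral\<^sup>L lborel (sN N)) \<longlonglongrightarrow> integral\<^sup>L lborel g"
    by (rule integral_dominated_convergence[where s=sN, OF gm sNm wi]) (use lim bnd in auto)
  thus "(\<lambda>N. mellin (PN N) s) \<longlonglongrightarrow> mellin (Pop f) s"
    unfolding mellin_def set_lebesgue_integral_def sN_def g_def .
qed

lemma main_ctx:
  "(AE x in lborel. 0 < x \<longrightarrow> summable (\<lambda>n. f (real (Suc n) * x)))
   \<and> set_integrable lborel {0<..} (\<lambda>t. complex_of_real t powr (s - 1) * f t)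
   \<and> set_integrable lborel {0<..} (\<lambda>x. complex_of_real x powr (s - 1) * Pop f x)
   \<and> zeta s * mellin f s = mellin (Pop f) s"
proof (intro conjI)
  show "AE x in lborel. 0 < x \<longrightarrow> summable (\<lambda>n. f (real (Suc n) * x))"
    by (rule AE_I2) (intro impI P_conv(1))
  show "set_integrable lborel {0<..} (\<lambda>t. complex_of_real t powr (s - 1) * f t)" by (rule mf_int)
  show "set_integrable lborel {0<..} (\<lambda>x. complex_of_real x powr (s - 1) * Pop f x)" by (rule mellin_Pop(1))
  have l1: "(\<lambda>N. mellin (PN N) s) \<longlonglongrightarrow> zeta s * mellin f s"
  proof -
    have "(\<lambda>N. ((\<Sum>n<N. of_nat (Suc n) powr (-s)) - of_nat (N+1) powr (1 - s) / (1 - s)) * mellin f s)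
          \<longlonglongrightarrow> zeta s * mellin f s"
      by (intro tendsto_intros zeta_lim s0 s1)
    moreover have "mellin (PN N) s = ((\<Sum>n<N. of_nat (Suc n) powr (-s)) - of_nat (N+1) powr (1 - s) / (1 - s)) * mellin f s" for N
      unfolding mellin_def[of "PN N" s] by (rule mPN(2))
    ultimately show ?thesis by simp
  qed
  show "zeta s * mellin f s = mellin (Pop f) s"
    by (rule LIMSEQ_unique[OF l1 mellin_Pop(2)])
qed

end

end

theorem mainTheorem10:
  fixes f :: "real \<Rightarrow> complex" and s :: complex
  assumes "good_kernel f"
    and "0 < Re s" and "Re s < 1"
  shows "(AE x in lborel. 0 < x \<longrightarrow> summable (\<lambda>n. f (real (Suc n) * x)))
       \<and> set_integrable lborel {0<..} (\<lambda>t. complex_of_real t powr (s - 1) * f t)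
       \<and> set_integrable lborel {0<..} (\<lambda>x. complex_of_real x powr (s - 1) * Pop f x)
       \<and> zeta s * mellin f s = mellin (Pop f) s"
proof -
  from assms(1) obtain f' where
    fd: "\<forall>t\<ge>0. (f has_vector_derivative f' t) (at t within {0..})"
    and f'c: "continuous_on {0..} f'"
    and tf'i: "set_integrable lborel {0<..} (\<lambda>t. complex_of_real t * f' t)"
    and flim: "(f \<longlongrightarrow> 0) at_top"
    and fi: "set_integrable lborel {0<..} f"
    unfolding good_kernel_def by blast
  show ?thesis
    by (rule main_ctx[of f f' s]) (use fd f'c tf'i flim fi assms(2,3) in auto)
qed


end
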